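(* Let $\mathcal{C}$ be a category. The functor $\mathcal G\colon\mathbf{Comon}\to\mathbf{Cat}/\mathcal{C}^{\mathbf 2}$ sending a comonad over $\mathrm{dom}$ $\mathsf L$ to $U_{\mathsf L}\colon\mathsf L\text{-}\mathbf{Map}\to\mathcal{C}^{\mathbf 2}$ is lax monoidal from $(\mathbf{Comon},\otimes,I)$ to $(\mathbf{Cat}/\mathcal{C}^{\mathbf 2},\bullet,\mathcal I)$.
   Context: $\mathcal{C}^{\mathbf 2}$ is the arrow category. $\mathbf{Comon}$: objects are comonads over $\mathrm{dom}$, i.e. functorial factorisations $(E,\lambda,\rho)$ ($E\colon\mathcal{C}^{\mathbf 2}\to\mathcal{C}$, natural $\lambda\colon\mathrm{dom}\Rightarrow E$, $\rho\colon E\Rightarrow\mathrm{cod}$, $\rho_f\lambda_f=f$) with natural $\sigma_f\colon Ef\to E(\lambda_f)$, $\sigma_f\lambda_f=\lambda_{\lambda_f}$, $\rho_{\lambda_f}\sigma_f=1$, $E(1_X,\rho_f)\sigma_f=1$, $E(1_X,\sigma_f)\sigma_f=\sigma_{\lambda_f}\sigma_f$; morphisms natural $\alpha\colon E\Rightarrow E'$ with $\alpha\lambda=\lambda'$, $\rho'\alpha=\rho$, $\sigma'_f\alpha_f=\alpha_{\lambda'_f}E(1_X,\alpha_f)\sigma_f$. Unit $I$: $E=\mathrm{dom}$, $\lambda=1$, $\rho=\kappa$ (so $I$-coalgebras are exactly the isomorphisms). Tensor: $\mathsf L^2\otimes\mathsf L^1$ has factorisation $X\xrightarrow{\lambda^2_{\rho^1_f}\lambda^1_f}E^2(\rho^1_f)\xrightarrow{\rho^2_{\rho^1_f}}Y$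 and comultiplication $E^2(E^1(1_X,\lambda^2_{\rho^1_f}),1_Y)\circ E^2(\sigma^1_f,1_Y)\circ\sigma^2_{\rho^1_f}$; on morphisms $(\beta\otimes\alpha)_f=\beta_{\nu_f}E^2(\alpha_f,1_Y)$ where $\nu$ is the right part of the codomain of $\alpha$. $\mathsf L\text{-}\mathbf{Map}$: objects $(f,s)$, $s\colon Y\to Ef$, $sf=\lambda_f$, $\rho_fs=1_Y$, $\sigma_fs=E(1_X,s)s$; morphisms squares with $tk=E(h,k)s$. On morphisms, $\mathcal G(\alpha)$ sends $(f,s)$ to $(f,\alpha_fs)$. $(\bullet,\mathcal I)$ on $\mathbf{Cat}/\mathcal{C}^{\mathbf 2}$: $\mathcal I=(\mathcal{C}\to\mathcal{C}^{\mathbf 2},X\mapsto1_X)$; $\mathcal A\bullet\mathcal B$ is the pullback of $\mathrm{cod}\circ U_{\mathcal B}$ and $\mathrm{dom}\circ U_{\mathcal A}$, with projection $(b,a)\mapsto U_{\mathcal A}a\circ U_{\mathcal B}b$. *)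

theory Defs
  imports Main
begin

record ('o,'a) cat =
  obj :: "'o set"
  arr :: "'a set"
  dm  :: "'a \<Rightarrow> 'o"
  cd  :: "'a \<Rightarrow> 'o"
  idn :: "'o \<Rightarrow> 'a"
  cmp :: "'a \<Rightarrow> 'a \<Rightarrow> 'a"

definition category :: "('o,'a) cat \<Rightarrow> bool" where
  "category A \<longleftrightarrow>
    (\<forall>f\<in>arr A. dm A f \<in> obj A \<and> cd A f \<in> obj A) \<and>
    (\<forall>X\<in>obj A. idn A X \<in> arr A \<and> dm A (idn A X) = X \<and> cd A (idn A X) = X) \<and>
    (\<forall>f\<in>arr A. \<forall>g\<in>arr A. cd A f = dm A g \<longrightarrow>
        cmp A g f \<in> arr A \<and> dm A (cmp A g f) = dm A f \<and> cd A (cmp A g f) = cd A g) \<and>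
    (\<forall>f\<in>arr A. cmp A (idn A (cd A f)) f = f \<and> cmp A f (idn A (dm A f)) = f) \<and>
    (\<forall>f\<in>arr A. \<forall>g\<in>arr A. \<forall>h\<in>arr A. cd A f = dm A g \<longrightarrow> cd A g = dm A h \<longrightarrow>
        cmp A h (cmp A g f) = cmp A (cmp A h g) f)"

definition hom :: "('o,'a) cat \<Rightarrow> 'a \<Rightarrow> 'o \<Rightarrow> 'o \<Rightarrow> bool" where
  "hom A f X Y \<longleftrightarrow> f \<in> arr A \<and> dm A f = X \<and> cd A f = Y"

record ('o1,'a1,'o2,'a2) ftr =
  fo :: "'o1 \<Rightarrow> 'o2"
  fa :: "'a1 \<Rightarrow> 'a2"

definition is_functor :: "('o1,'a1) cat \<Rightarrow> ('o2,'a2) cat \<Rightarrow> ('o1,'a1,'o2,'a2) ftr \<Rightarrow> bool" where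
  "is_functor A B F \<longleftrightarrow>
    (\<forall>X\<in>obj A. fo F X \<in> obj B) \<and>
    (\<forall>a\<in>arr A. fa F a \<in> arr B \<and> dm B (fa F a) = fo F (dm A a) \<and> cd B (fa F a) = fo F (cd A a)) \<and>
    (\<forall>X\<in>obj A. fa F (idn A X) = idn B (fo F X)) \<and>
    (\<forall>a\<in>arr A. \<forall>b\<in>arr A. cd A a = dm A b \<longrightarrow> fa F (cmp A b a) = cmp B (fa F b) (fa F a))"

text \<open>A morphism (h,k) : f \<rightarrow> g of the arrow category is stored as the tuple (f,g,h,k).\<close>

type_synonym 'm sq = "'m \<times> 'm \<times> 'm \<times> 'm"

definition sq_h :: "'m sq \<Rightarrow> 'm" where "sq_h q = fst (snd (snd q))"
definition sq_k :: "'m sq \<Rightarrow> 'm" where "sq_k q = snd (snd (snd q))"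

definition arrow_cat :: "('o,'m) cat \<Rightarrow> ('m, 'm sq) cat" where
  "arrow_cat C = \<lparr> obj = arr C,
     arr = {(f,g,h,k). f \<in> arr C \<and> g \<in> arr C \<and> h \<in> arr C \<and> k \<in> arr C \<and>
                       dm C h = dm C f \<and> cd C h = dm C g \<and> dm C k = cd C f \<and> cd C k = cd C g \<and>
                       cmp C g h = cmp C k f},
     dm = (\<lambda>(f,g,h,k). f),
     cd = (\<lambda>(f,g,h,k). g),
     idn = (\<lambda>f. (f, f, idn C (dm C f), idn C (cd C f))),
     cmp = (\<lambda>(g',l,h',k') (f,g,h,k). (f, l, cmp C h' h, cmp C k' k)) \<rparr>"

section \<open>Comonads over dom (the category Comon)\<close>

record ('o,'m) comon =
  EF  :: "('m, 'm sq, 'o, 'm) ftr"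
  lam :: "'m \<Rightarrow> 'm"
  rho :: "'m \<Rightarrow> 'm"
  sig :: "'m \<Rightarrow> 'm"

definition E0 :: "('o,'m) comon \<Rightarrow> 'm \<Rightarrow> 'o" where "E0 L = fo (EF L)"
definition E1 :: "('o,'m) comon \<Rightarrow> 'm sq \<Rightarrow> 'm" where "E1 L = fa (EF L)"

definition comonad_dom :: "('o,'m) cat \<Rightarrow> ('o,'m) comon \<Rightarrow> bool" where
  "comonad_dom C L \<longleftrightarrow>
    is_functor (arrow_cat C) C (EF L) \<and>
    (\<forall>f\<in>arr C. hom C (lam L f) (dm C f) (E0 L f)) \<and>
    (\<forall>f\<in>arr C. hom C (rho L f) (E0 L f) (cd C f)) \<and>
    (\<forall>f\<in>arr C. hom C (sig L f) (E0 L f) (E0 L (lam L f))) \<and>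
    (\<forall>f g h k. (f,g,h,k) \<in> arr (arrow_cat C) \<longrightarrow>
        cmp C (lam L g) h = cmp C (E1 L (f,g,h,k)) (lam L f) \<and>
        cmp C k (rho L f) = cmp C (rho L g) (E1 L (f,g,h,k)) \<and>
        cmp C (sig L g) (E1 L (f,g,h,k))
          = cmp C (E1 L (lam L f, lam L g, h, E1 L (f,g,h,k))) (sig L f)) \<and>
    (\<forall>f\<in>arr C. cmp C (rho L f) (lam L f) = f) \<and>
    (\<forall>f\<in>arr C. cmp C (sig L f) (lam L f) = lam L (lam L f)) \<and>
    (\<forall>f\<in>arr C. cmp C (rho L (lam L f)) (sig L f) = idn C (E0 L f)) \<and>
    (\<forall>f\<in>arr C. cmp C (E1 L (lam L f, f, idn C (dm C f), rho L f)) (sig L f) = idn C (E0 L f)) \<and>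
    (\<forall>f\<in>arr C. cmp C (E1 L (lam L f, lam L (lam L f), idn C (dm C f), sig L f)) (sig L f)
                = cmp C (sig L (lam L f)) (sig L f))"

definition comon_mor :: "('o,'m) cat \<Rightarrow> ('o,'m) comon \<Rightarrow> ('o,'m) comon \<Rightarrow> ('m \<Rightarrow> 'm) \<Rightarrow> bool" where
  "comon_mor C L L' \<alpha> \<longleftrightarrow>
    (\<forall>f\<in>arr C. hom C (\<alpha> f) (E0 L f) (E0 L' f)) \<and>
    (\<forall>f g h k. (f,g,h,k) \<in> arr (arrow_cat C) \<longrightarrow>
        cmp C (\<alpha> g) (E1 L (f,g,h,k)) = cmp C (E1 L' (f,g,h,k)) (\<alpha> f)) \<and>
    (\<forall>f\<in>arr C. cmp C (\<alpha> f) (lam L f) = lam L' f) \<and>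
    (\<forall>f\<in>arr C. cmp C (rho L' f) (\<alpha> f) = rho L f) \<and>
    (\<forall>f\<in>arr C. cmp C (sig L' f) (\<alpha> f)
        = cmp C (\<alpha> (lam L' f)) (cmp C (E1 L (lam L f, lam L' f, idn C (dm C f), \<alpha> f)) (sig L f)))"

text \<open>Identity family on a comonad (used for the identity associator / unitors of Comon).\<close>

definition idc :: "('o,'m) cat \<Rightarrow> ('o,'m) comon \<Rightarrow> 'm \<Rightarrow> 'm" where
  "idc C L = (\<lambda>f. idn C (E0 L f))"

definition unitC :: "('o,'m) cat \<Rightarrow> ('o,'m) comon" where
  "unitC C = \<lparr> EF = \<lparr>fo = dm C, fa = (\<lambda>(f,g,h,k). h)\<rparr>,
               lam = (\<lambda>f. idn C (dm C f)),
               rho = (\<lambda>f. f),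
               sig = (\<lambda>f. idn C (dm C f)) \<rparr>"

definition tens :: "('o,'m) cat \<Rightarrow> ('o,'m) comon \<Rightarrow> ('o,'m) comon \<Rightarrow> ('o,'m) comon" where
  "tens C L2 L1 =
    (let lamT = (\<lambda>f. cmp C (lam L2 (rho L1 f)) (lam L1 f));
         t = (\<lambda>f. cmp C (lam L2 (rho L1 f)) (rho L1 (lam L1 f)))
     in \<lparr> EF = \<lparr> fo = (\<lambda>f. E0 L2 (rho L1 f)),
                 fa = (\<lambda>(f,g,h,k). E1 L2 (rho L1 f, rho L1 g, E1 L1 (f,g,h,k), k)) \<rparr>,
          lam = lamT,
          rho = (\<lambda>f. rho L2 (rho L1 f)),
          sig = (\<lambda>f. cmp C
                   (E1 L2 (t f, rho L1 (lamT f),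
                           E1 L1 (lam L1 f, lamT f, idn C (dm C f), lam L2 (rho L1 f)),
                           idn C (E0 L2 (rho L1 f))))
                   (cmp C (E1 L2 (lam L2 (rho L1 f), t f, sig L1 f, idn C (E0 L2 (rho L1 f))))
                          (sig L2 (rho L1 f)))) \<rparr>)"

definition tens_mor :: "('o,'m) cat \<Rightarrow> ('o,'m) comon \<Rightarrow> ('o,'m) comon \<Rightarrow> ('o,'m) comon
      \<Rightarrow> ('m \<Rightarrow> 'm) \<Rightarrow> ('m \<Rightarrow> 'm) \<Rightarrow> 'm \<Rightarrow> 'm" where
  "tens_mor C L2 L1 L1' \<beta> \<alpha> =
     (\<lambda>f. cmp C (\<beta> (rho L1' f)) (E1 L2 (rho L1 f, rho L1' f, \<alpha> f, idn C (cd C f))))"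

section \<open>Cat over C^2\<close>

type_synonym ('o,'a,'m) ocat = "('o,'a) cat \<times> ('o,'a,'m,'m sq) ftr"

definition over_cat :: "('x,'m) cat \<Rightarrow> ('o,'a,'m) ocat \<Rightarrow> bool" where
  "over_cat C A \<longleftrightarrow> category (fst A) \<and> is_functor (fst A) (arrow_cat C) (snd A)"

definition over_functor :: "('o1,'a1,'m) ocat \<Rightarrow> ('o2,'a2,'m) ocat \<Rightarrow> ('o1,'a1,'o2,'a2) ftr \<Rightarrow> bool" where
  "over_functor A B F \<longleftrightarrow> is_functor (fst A) (fst B) F \<and>
     (\<forall>x\<in>obj (fst A). fo (snd B) (fo F x) = fo (snd A) x) \<and>
     (\<forall>a\<in>arr (fst A). fa (snd B) (fa F a) = fa (snd A) a)"

text \<open>A \<bullet> B: pullback of cod \<circ> U_B and dom \<circ> U_A; objects are pairs (b,a),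
  projection (b,a) \<mapsto> U_A a \<circ> U_B b.\<close>

definition bullet :: "('x,'m) cat \<Rightarrow> ('oa,'aa,'m) ocat \<Rightarrow> ('ob,'ab,'m) ocat \<Rightarrow> ('ob \<times> 'oa, 'ab \<times> 'aa, 'm) ocat" where
  "bullet C A B =
    (let CA = fst A; UA = snd A; CB = fst B; UB = snd B in
     (\<lparr> obj = {(b,a). b \<in> obj CB \<and> a \<in> obj CA \<and> cd C (fo UB b) = dm C (fo UA a)},
        arr = {(\<beta>,\<alpha>). \<beta> \<in> arr CB \<and> \<alpha> \<in> arr CA \<and> sq_k (fa UB \<beta>) = sq_h (fa UA \<alpha>)},
        dm = (\<lambda>(\<beta>,\<alpha>). (dm CB \<beta>, dm CA \<alpha>)),
        cd = (\<lambda>(\<beta>,\<alpha>). (cd CB \<beta>, cd CA \<alpha>)),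
        idn = (\<lambda>(b,a). (idn CB b, idn CA a)),
        cmp = (\<lambda>(\<beta>',\<alpha>') (\<beta>,\<alpha>). (cmp CB \<beta>' \<beta>, cmp CA \<alpha>' \<alpha>)) \<rparr>,
      \<lparr> fo = (\<lambda>(b,a). cmp C (fo UA a) (fo UB b)),
        fa = (\<lambda>(\<beta>,\<alpha>). (cmp C (fo UA (dm CA \<alpha>)) (fo UB (dm CB \<beta>)),
                         cmp C (fo UA (cd CA \<alpha>)) (fo UB (cd CB \<beta>)),
                         sq_h (fa UB \<beta>), sq_k (fa UA \<alpha>))) \<rparr>))"

text \<open>Associator (A \<bullet> B) \<bullet> C \<rightarrow> A \<bullet> (B \<bullet> C) of Cat/C^2 (same formula on objects and morphisms).
  F \<bullet> G on objects/morphisms is map_prod (G-part) (F-part).\<close>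

definition reassoc :: "'c \<times> ('b \<times> 'a) \<Rightarrow> ('c \<times> 'b) \<times> 'a" where
  "reassoc = (\<lambda>(c,(b,a)). ((c,b),a))"

definition unitI :: "('o,'m) cat \<Rightarrow> ('o,'m,'m) ocat" where
  "unitI C = (C, \<lparr> fo = (\<lambda>X. idn C X), fa = (\<lambda>m. (idn C (dm C m), idn C (cd C m), m, m)) \<rparr>)"

section \<open>The functor G : Comon \<rightarrow> Cat/C^2\<close>

type_synonym 'm gmor = "('m \<times> 'm) \<times> ('m \<times> 'm) \<times> 'm \<times> 'm"

definition LMap :: "('o,'m) cat \<Rightarrow> ('o,'m) comon \<Rightarrow> ('m \<times> 'm, 'm gmor) cat" where
  "LMap C L = (let Ob = {(f,s). f \<in> arr C \<and> hom C s (cd C f) (E0 L f) \<and>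
                         cmp C s f = lam L f \<and> cmp C (rho L f) s = idn C (cd C f) \<and>
                         cmp C (sig L f) s = cmp C (E1 L (f, lam L f, idn C (dm C f), s)) s}
     in \<lparr> obj = Ob,
          arr = {((f,s),(g,t),h,k). (f,s) \<in> Ob \<and> (g,t) \<in> Ob \<and>
                    (f,g,h,k) \<in> arr (arrow_cat C) \<and> cmp C t k = cmp C (E1 L (f,g,h,k)) s},
          dm = (\<lambda>(x,y,h,k). x),
          cd = (\<lambda>(x,y,h,k). y),
          idn = (\<lambda>(f,s). ((f,s),(f,s), idn C (dm C f), idn C (cd C f))),
          cmp = (\<lambda>(y,z,h',k') (x,y',h,k). (x, z, cmp C h' h, cmp C k' k)) \<rparr>)"

definition GU :: "('m \<times> 'm, 'm gmor, 'm, 'm sq) ftr" where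
  "GU = \<lparr> fo = fst, fa = (\<lambda>((f,s),(g,t),h,k). (f,g,h,k)) \<rparr>"

definition Gob :: "('o,'m) cat \<Rightarrow> ('o,'m) comon \<Rightarrow> ('m \<times> 'm, 'm gmor, 'm) ocat" where
  "Gob C L = (LMap C L, GU)"

definition Gmor :: "('o,'m) cat \<Rightarrow> ('m \<Rightarrow> 'm) \<Rightarrow> ('m \<times> 'm, 'm gmor, 'm \<times> 'm, 'm gmor) ftr" where
  "Gmor C \<alpha> = \<lparr> fo = (\<lambda>(f,s). (f, cmp C (\<alpha> f) s)),
                fa = (\<lambda>((f,s),(g,t),h,k). ((f, cmp C (\<alpha> f) s), (g, cmp C (\<alpha> g) t), h, k)) \<rparr>"

section \<open>Lax monoidal structure on G\<close>

text \<open>phi L2 L1 : G L2 \<bullet> G L1 \<rightarrow> G (L2 \<otimes> L1) and phi0 : \<I> \<rightarrow> G I, satisfying naturality,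
  the associativity hexagon and the two unit laws; the associator and unitors of
  (Comon, \<otimes>, I) are identities.\<close>

definition lax_monoidal_G :: "('o,'m) cat
   \<Rightarrow> (('o,'m) comon \<Rightarrow> ('o,'m) comon \<Rightarrow> (('m \<times> 'm) \<times> ('m \<times> 'm), 'm gmor \<times> 'm gmor, 'm \<times> 'm, 'm gmor) ftr)
   \<Rightarrow> ('o, 'm, 'm \<times> 'm, 'm gmor) ftr \<Rightarrow> bool" where
  "lax_monoidal_G C \<phi> \<phi>0 \<longleftrightarrow>
    (\<forall>L2 L1. comonad_dom C L2 \<longrightarrow> comonad_dom C L1 \<longrightarrow>
        over_functor (bullet C (Gob C L2) (Gob C L1)) (Gob C (tens C L2 L1)) (\<phi> L2 L1)) \<and>
    over_functor (unitI C) (Gob C (unitC C)) \<phi>0 \<and>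
    (\<forall>L2 L2' L1 L1' \<beta> \<alpha>. comonad_dom C L2 \<longrightarrow> comonad_dom C L2' \<longrightarrow>
        comonad_dom C L1 \<longrightarrow> comonad_dom C L1' \<longrightarrow>
        comon_mor C L2 L2' \<beta> \<longrightarrow> comon_mor C L1 L1' \<alpha> \<longrightarrow>
        (\<forall>x\<in>obj (fst (bullet C (Gob C L2) (Gob C L1))).
           fo (\<phi> L2' L1') (map_prod (fo (Gmor C \<alpha>)) (fo (Gmor C \<beta>)) x)
             = fo (Gmor C (tens_mor C L2 L1 L1' \<beta> \<alpha>)) (fo (\<phi> L2 L1) x)) \<and>
        (\<forall>x\<in>arr (fst (bullet C (Gob C L2) (Gob C L1))).
           fa (\<phi> L2' L1') (map_prod (fa (Gmor C \<alpha>)) (fa (Gmor C \<beta>)) x)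
             = fa (Gmor C (tens_mor C L2 L1 L1' \<beta> \<alpha>)) (fa (\<phi> L2 L1) x))) \<and>
    (\<forall>L3 L2 L1. comonad_dom C L3 \<longrightarrow> comonad_dom C L2 \<longrightarrow> comonad_dom C L1 \<longrightarrow>
        (\<forall>x\<in>obj (fst (bullet C (bullet C (Gob C L3) (Gob C L2)) (Gob C L1))).
           fo (Gmor C (idc C (tens C (tens C L3 L2) L1)))
              (fo (\<phi> (tens C L3 L2) L1) (map_prod id (fo (\<phi> L3 L2)) x))
           = fo (\<phi> L3 (tens C L2 L1)) (map_prod (fo (\<phi> L2 L1)) id (reassoc x))) \<and>
        (\<forall>x\<in>arr (fst (bullet C (bullet C (Gob C L3) (Gob C L2)) (Gob C L1))).
           fa (Gmor C (idc C (tens C (tens C L3 L2) L1)))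
              (fa (\<phi> (tens C L3 L2) L1) (map_prod id (fa (\<phi> L3 L2)) x))
           = fa (\<phi> L3 (tens C L2 L1)) (map_prod (fa (\<phi> L2 L1)) id (reassoc x)))) \<and>
    (\<forall>L. comonad_dom C L \<longrightarrow>
        (\<forall>x\<in>obj (fst (bullet C (unitI C) (Gob C L))).
           fo (Gmor C (idc C (tens C (unitC C) L))) (fo (\<phi> (unitC C) L) (map_prod id (fo \<phi>0) x)) = fst x) \<and>
        (\<forall>x\<in>arr (fst (bullet C (unitI C) (Gob C L))).
           fa (Gmor C (idc C (tens C (unitC C) L))) (fa (\<phi> (unitC C) L) (map_prod id (fa \<phi>0) x)) = fst x) \<and>
        (\<forall>x\<in>obj (fst (bullet C (Gob C L) (unitI C))).
           fo (Gmor C (idc C (tens C L (unitC C)))) (fo (\<phi> L (unitC C)) (map_prod (fo \<phi>0) id x)) = snd x) \<and>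
        (\<forall>x\<in>arr (fst (bullet C (Gob C L) (unitI C))).
           fa (Gmor C (idc C (tens C L (unitC C)))) (fa (\<phi> L (unitC C)) (map_prod (fa \<phi>0) id x)) = snd x))"

end

theory Submission
  imports Defs
begin
definition sqc :: "('o,'m) cat \<Rightarrow> 'm \<Rightarrow> 'm \<Rightarrow> 'm \<Rightarrow> 'm \<Rightarrow> bool" where
  "sqc C f g h k \<longleftrightarrow> (f,g,h,k) \<in> arr (arrow_cat C)"

locale ctx =
  fixes C :: "('o,'m) cat"
  assumes cat: "category C"
begin

lemma arr_dm[simp]: "f \<in> arr C \<Longrightarrow> dm C f \<in> obj C"
  using cat unfolding category_def by blast
lemma arr_cd[simp]: "f \<in> arr C \<Longrightarrow> cd C f \<in> obj C"
  using cat unfolding category_def by blast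
lemma idn_arr[simp]: "X \<in> obj C \<Longrightarrow> idn C X \<in> arr C"
  using cat unfolding category_def by blast
lemma dm_idn[simp]: "X \<in> obj C \<Longrightarrow> dm C (idn C X) = X"
  using cat unfolding category_def by blast
lemma cd_idn[simp]: "X \<in> obj C \<Longrightarrow> cd C (idn C X) = X"
  using cat unfolding category_def by blast
lemma cmp_arr[simp]: "f \<in> arr C \<Longrightarrow> g \<in> arr C \<Longrightarrow> cd C f = dm C g \<Longrightarrow> cmp C g f \<in> arr C"
  using cat unfolding category_def by blast
lemma dm_cmp[simp]: "f \<in> arr C \<Longrightarrow> g \<in> arr C \<Longrightarrow> cd C f = dm C g \<Longrightarrow> dm C (cmp C g f) = dm C f"
  using cat unfolding category_def by blast
lemma cd_cmp[simp]: "f \<in> arr C \<Longrightarrow> g \<in> arr C \<Longrightarrow> cd C f = dm C g \<Longrightarrow> cd C (cmp C g f) = cd C g"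
  using cat unfolding category_def by blast
lemma idl[simp]: "f \<in> arr C \<Longrightarrow> cd C f = Y \<Longrightarrow> cmp C (idn C Y) f = f"
  using cat unfolding category_def by blast
lemma idr[simp]: "f \<in> arr C \<Longrightarrow> dm C f = X \<Longrightarrow> cmp C f (idn C X) = f"
  using cat unfolding category_def by blast
lemma assoc[simp]: "f \<in> arr C \<Longrightarrow> g \<in> arr C \<Longrightarrow> h \<in> arr C \<Longrightarrow> cd C f = dm C g \<Longrightarrow> cd C g = dm C h \<Longrightarrow>
   cmp C (cmp C h g) f = cmp C h (cmp C g f)"
  using cat unfolding category_def by metis

lemma sqc_iff: "sqc C f g h k \<longleftrightarrow> f \<in> arr C \<and> g \<in> arr C \<and> h \<in> arr C \<and> k \<in> arr C \<and>
     dm C h = dm C f \<and> cd C h = dm C g \<and> dm C k = cd C f \<and> cd C k = cd C g \<and> cmp C g h = cmp C k f"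
  unfolding sqc_def arrow_cat_def by simp

lemma sqc_arr: "sqc C f g h k \<Longrightarrow> f \<in> arr C \<and> g \<in> arr C \<and> h \<in> arr C \<and> k \<in> arr C \<and>
     dm C h = dm C f \<and> cd C h = dm C g \<and> dm C k = cd C f \<and> cd C k = cd C g"
  unfolding sqc_iff by blast

lemma sqc_comm: "sqc C f g h k \<Longrightarrow> cmp C g h = cmp C k f"
  unfolding sqc_iff by blast

lemma sqc_id[simp]: "f \<in> arr C \<Longrightarrow> sqc C f f (idn C (dm C f)) (idn C (cd C f))"
  unfolding sqc_iff by simp

lemma sqc_comp: "sqc C f g h k \<Longrightarrow> sqc C g g' h' k' \<Longrightarrow> sqc C f g' (cmp C h' h) (cmp C k' k)"
  unfolding sqc_iff by (metis assoc cmp_arr cd_cmp dm_cmp)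

lemma cont1: "cmp C a b = c \<Longrightarrow> x \<in> arr C \<Longrightarrow> a \<in> arr C \<Longrightarrow> b \<in> arr C \<Longrightarrow>
   cd C x = dm C b \<Longrightarrow> cd C b = dm C a \<Longrightarrow> cmp C a (cmp C b x) = cmp C c x"
  by (metis assoc)

lemma cont: "cmp C a b = cmp C c d \<Longrightarrow> x \<in> arr C \<Longrightarrow> a \<in> arr C \<Longrightarrow> b \<in> arr C \<Longrightarrow> c \<in> arr C \<Longrightarrow> d \<in> arr C \<Longrightarrow>
   cd C x = dm C b \<Longrightarrow> cd C b = dm C a \<Longrightarrow> cd C x = dm C d \<Longrightarrow> cd C d = dm C c \<Longrightarrow>
   cmp C a (cmp C b x) = cmp C c (cmp C d x)"
  by (metis assoc)

end

lemma arrow_cat_simps[simp]: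
  "obj (arrow_cat C) = arr C"
  "dm (arrow_cat C) (f,g,h,k) = f"
  "cd (arrow_cat C) (f,g,h,k) = g"
  "idn (arrow_cat C) f = (f, f, idn C (dm C f), idn C (cd C f))"
  "cmp (arrow_cat C) (g',l,h',k') (f,g,h,k) = (f, l, cmp C h' h, cmp C k' k)"
  unfolding arrow_cat_def by auto

context ctx begin

lemma E0_obj[simp]: "comonad_dom C L \<Longrightarrow> f \<in> arr C \<Longrightarrow> E0 L f \<in> obj C"
  unfolding comonad_dom_def is_functor_def E0_def by simp

lemma E1_arr[simp]: "comonad_dom C L \<Longrightarrow> sqc C f g h k \<Longrightarrow> E1 L (f,g,h,k) \<in> arr C"
  unfolding comonad_dom_def is_functor_def E1_def sqc_def by fastforce
lemma E1_dm[simp]: "comonad_dom C L \<Longrightarrow> sqc C f g h k \<Longrightarrow> dm C (E1 L (f,g,h,k)) = E0 L f"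
  unfolding comonad_dom_def is_functor_def E1_def E0_def sqc_def by fastforce
lemma E1_cd[simp]: "comonad_dom C L \<Longrightarrow> sqc C f g h k \<Longrightarrow> cd C (E1 L (f,g,h,k)) = E0 L g"
  unfolding comonad_dom_def is_functor_def E1_def E0_def sqc_def by fastforce
lemma E1_id[simp]: "comonad_dom C L \<Longrightarrow> f \<in> arr C \<Longrightarrow> X = dm C f \<Longrightarrow> Y = cd C f \<Longrightarrow>
   E1 L (f,f,idn C X,idn C Y) = idn C (E0 L f)"
  unfolding comonad_dom_def is_functor_def E1_def E0_def by fastforce
lemma E1_comp: "comonad_dom C L \<Longrightarrow> sqc C f g h k \<Longrightarrow> sqc C g g' h' k' \<Longrightarrow>
   cmp C (E1 L (g,g',h',k')) (E1 L (f,g,h,k)) = E1 L (f,g',cmp C h' h, cmp C k' k)"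
  unfolding comonad_dom_def is_functor_def E1_def sqc_def
  by (metis (no_types, lifting) arrow_cat_simps(2,3,5))

lemma lam_t[simp]: "comonad_dom C L \<Longrightarrow> f \<in> arr C \<Longrightarrow> lam L f \<in> arr C"
   "comonad_dom C L \<Longrightarrow> f \<in> arr C \<Longrightarrow> dm C (lam L f) = dm C f"
   "comonad_dom C L \<Longrightarrow> f \<in> arr C \<Longrightarrow> cd C (lam L f) = E0 L f"
  unfolding comonad_dom_def hom_def by auto
lemma rho_t[simp]: "comonad_dom C L \<Longrightarrow> f \<in> arr C \<Longrightarrow> rho L f \<in> arr C"
   "comonad_dom C L \<Longrightarrow> f \<in> arr C \<Longrightarrow> dm C (rho L f) = E0 L f"
   "comonad_dom C L \<Longrightarrow> f \<in> arr C \<Longrightarrow> cd C (rho L f) = cd C f"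
  unfolding comonad_dom_def hom_def by auto
lemma sig_t[simp]: "comonad_dom C L \<Longrightarrow> f \<in> arr C \<Longrightarrow> sig L f \<in> arr C"
   "comonad_dom C L \<Longrightarrow> f \<in> arr C \<Longrightarrow> dm C (sig L f) = E0 L f"
   "comonad_dom C L \<Longrightarrow> f \<in> arr C \<Longrightarrow> cd C (sig L f) = E0 L (lam L f)"
  unfolding comonad_dom_def hom_def by auto

lemma nat_lam: "comonad_dom C L \<Longrightarrow> sqc C f g h k \<Longrightarrow>
   cmp C (lam L g) h = cmp C (E1 L (f,g,h,k)) (lam L f)"
  unfolding comonad_dom_def sqc_def by blast
lemma nat_rho: "comonad_dom C L \<Longrightarrow> sqc C f g h k \<Longrightarrow>
   cmp C k (rho L f) = cmp C (rho L g) (E1 L (f,g,h,k))"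
  unfolding comonad_dom_def sqc_def by blast
lemma nat_sig: "comonad_dom C L \<Longrightarrow> sqc C f g h k \<Longrightarrow>
   cmp C (sig L g) (E1 L (f,g,h,k)) = cmp C (E1 L (lam L f, lam L g, h, E1 L (f,g,h,k))) (sig L f)"
  unfolding comonad_dom_def sqc_def by blast
lemma E1_cont: "comonad_dom C L \<Longrightarrow> sqc C f g h k \<Longrightarrow> sqc C g g' h' k' \<Longrightarrow> x \<in> arr C \<Longrightarrow> cd C x = E0 L f \<Longrightarrow>
   cmp C (E1 L (g,g',h',k')) (cmp C (E1 L (f,g,h,k)) x) = cmp C (E1 L (f,g',cmp C h' h, cmp C k' k)) x"
  by (rule cont1[OF E1_comp]) auto

lemma rho_lam[simp]: "comonad_dom C L \<Longrightarrow> f \<in> arr C \<Longrightarrow> cmp C (rho L f) (lam L f) = f"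
  unfolding comonad_dom_def by blast
lemma sig_lam[simp]: "comonad_dom C L \<Longrightarrow> f \<in> arr C \<Longrightarrow> cmp C (sig L f) (lam L f) = lam L (lam L f)"
  unfolding comonad_dom_def by blast
lemma rho_sig[simp]: "comonad_dom C L \<Longrightarrow> f \<in> arr C \<Longrightarrow> cmp C (rho L (lam L f)) (sig L f) = idn C (E0 L f)"
  unfolding comonad_dom_def by blast

end

context ctx begin

lemma LMap_obj: "(f,s) \<in> obj (LMap C L) \<longleftrightarrow> f \<in> arr C \<and> s \<in> arr C \<and> dm C s = cd C f \<and> cd C s = E0 L f \<and>
   cmp C s f = lam L f \<and> cmp C (rho L f) s = idn C (cd C f) \<and>
   cmp C (sig L f) s = cmp C (E1 L (f, lam L f, idn C (dm C f), s)) s"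
  unfolding LMap_def Let_def hom_def by auto

lemma LMap_arr: "((f,s),(g,t),h,k) \<in> arr (LMap C L) \<longleftrightarrow> (f,s) \<in> obj (LMap C L) \<and> (g,t) \<in> obj (LMap C L) \<and>
   sqc C f g h k \<and> cmp C t k = cmp C (E1 L (f,g,h,k)) s"
  unfolding LMap_def Let_def sqc_def by auto

lemma LMap_arr_tuple: "x \<in> arr (LMap C L) \<Longrightarrow> \<exists>f s g t h k. x = ((f,s),(g,t),h,k)"
  by (cases x) auto

lemma LMap_simps[simp]:
  "dm (LMap C L) (x,y,h,k) = x" "cd (LMap C L) (x,y,h,k) = y"
  "idn (LMap C L) (f,s) = ((f,s),(f,s), idn C (dm C f), idn C (cd C f))"
  "cmp (LMap C L) (y,z,h',k') (x,y',h,k) = (x, z, cmp C h' h, cmp C k' k)"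
  unfolding LMap_def Let_def by auto

lemma arr_comp_cond:
  assumes L: "comonad_dom C L" and q1: "sqc C f g h k" and q2: "sqc C g u h' k'"
    and s: "s \<in> arr C" "dm C s = cd C f" "cd C s = E0 L f"
    and t: "t \<in> arr C" "dm C t = cd C g" "cd C t = E0 L g"
    and v: "v \<in> arr C" "dm C v = cd C u" "cd C v = E0 L u"
    and e1: "cmp C t k = cmp C (E1 L (f,g,h,k)) s" and e2: "cmp C v k' = cmp C (E1 L (g,u,h',k')) t"
  shows "cmp C v (cmp C k' k) = cmp C (E1 L (f,u,cmp C h' h,cmp C k' k)) s"
proof -
  note a1 = sqc_arr[OF q1] and a2 = sqc_arr[OF q2]
  have "cmp C v (cmp C k' k) = cmp C (cmp C v k') k" using a1 a2 v by simp
  also have "\<dots> = cmp C (E1 L (g,u,h',k')) (cmp C t k)" using a1 a2 v t e2 L q1 q2 by simp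
  also have "\<dots> = cmp C (E1 L (g,u,h',k')) (cmp C (E1 L (f,g,h,k)) s)" using e1 by simp
  also have "\<dots> = cmp C (cmp C (E1 L (g,u,h',k')) (E1 L (f,g,h,k))) s" using a1 a2 s L q1 q2 by simp
  also have "\<dots> = cmp C (E1 L (f,u,cmp C h' h,cmp C k' k)) s" using E1_comp[OF L q1 q2] by simp
  finally show ?thesis .
qed

lemma LMap_category: assumes L: "comonad_dom C L" shows "category (LMap C L)"
proof -
  {fix x assume "x \<in> arr (LMap C L)"
  then obtain f s g t h k where x: "x = ((f,s),(g,t),h,k)" using LMap_arr_tuple by blast
  have "dm (LMap C L) x \<in> obj (LMap C L) \<and> cd (LMap C L) x \<in> obj (LMap C L)"
    using \<open>x \<in> _\<close> unfolding x LMap_arr by simp}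
  note A1 = this
  {fix X assume X: "X \<in> obj (LMap C L)"
  obtain f s where Xd: "X = (f,s)" by (cases X)
  have "idn (LMap C L) X \<in> arr (LMap C L) \<and> dm (LMap C L) (idn (LMap C L) X) = X \<and> cd (LMap C L) (idn (LMap C L) X) = X"
    using X L unfolding Xd by (simp add: LMap_obj LMap_arr)}
  note A2 = this
  {fix x y assume x: "x \<in> arr (LMap C L)" and y: "y \<in> arr (LMap C L)" and xy: "cd (LMap C L) x = dm (LMap C L) y"
  obtain f s g t h k where xd: "x = ((f,s),(g,t),h,k)" using LMap_arr_tuple x by blast
  obtain g' t' u v h' k' where yd: "y = ((g',t'),(u,v),h',k')" using LMap_arr_tuple y by blast
  have gg: "g' = g" "t' = t" using xy unfolding xd yd by auto
  have "cmp (LMap C L) y x \<in> arr (LMap C L) \<and> dm (LMap C L) (cmp (LMap C L) y x) = dm (LMap C L) x \<and>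
        cd (LMap C L) (cmp (LMap C L) y x) = cd (LMap C L) y"
    using x y L unfolding xd yd gg LMap_arr LMap_obj
    by (auto simp: LMap_arr LMap_obj intro: sqc_comp arr_comp_cond)}
  note A3 = this
  {fix x assume x: "x \<in> arr (LMap C L)"
  obtain f s g t h k where xd: "x = ((f,s),(g,t),h,k)" using LMap_arr_tuple x by blast
  have "cmp (LMap C L) (idn (LMap C L) (cd (LMap C L) x)) x = x \<and> cmp (LMap C L) x (idn (LMap C L) (dm (LMap C L) x)) = x"
    using x unfolding xd LMap_arr by (auto dest!: sqc_arr)}
  note A4 = this
  {fix x y z assume x: "x \<in> arr (LMap C L)" and y: "y \<in> arr (LMap C L)" and z: "z \<in> arr (LMap C L)"
    and xy: "cd (LMap C L) x = dm (LMap C L) y" and yz: "cd (LMap C L) y = dm (LMap C L) z"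
  obtain f s g t h k where xd: "x = ((f,s),(g,t),h,k)" using LMap_arr_tuple x by blast
  obtain g' t' u v h' k' where yd: "y = ((g',t'),(u,v),h',k')" using LMap_arr_tuple y by blast
  obtain u' v' w r h'' k'' where zd: "z = ((u',v'),(w,r),h'',k'')" using LMap_arr_tuple z by blast
  have "cmp (LMap C L) z (cmp (LMap C L) y x) = cmp (LMap C L) (cmp (LMap C L) z y) x"
    using x y z xy yz unfolding xd yd zd LMap_arr by (auto dest!: sqc_arr)}
  note A5 = this
  show ?thesis unfolding category_def using A1 A2 A3 A4 A5 by blast
qed

lemma GU_functor: "is_functor (LMap C L) (arrow_cat C) GU"
proof -
  {fix X assume "X \<in> obj (LMap C L)" then have "fo GU X \<in> obj (arrow_cat C)"
    by (cases X) (simp add: GU_def LMap_obj)}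
  note A1 = this
  {fix x assume x: "x \<in> arr (LMap C L)"
  obtain f s g t h k where xd: "x = ((f,s),(g,t),h,k)" using LMap_arr_tuple x by blast
  have "fa GU x \<in> arr (arrow_cat C) \<and> dm (arrow_cat C) (fa GU x) = fo GU (dm (LMap C L) x) \<and>
        cd (arrow_cat C) (fa GU x) = fo GU (cd (LMap C L) x)"
    using x unfolding xd LMap_arr by (simp add: GU_def sqc_def)}
  note A2 = this
  {fix X assume "X \<in> obj (LMap C L)" then have "fa GU (idn (LMap C L) X) = idn (arrow_cat C) (fo GU X)"
    by (cases X) (simp add: GU_def LMap_obj)}
  note A3 = this
  {fix x y assume x: "x \<in> arr (LMap C L)" and y: "y \<in> arr (LMap C L)" and xy: "cd (LMap C L) x = dm (LMap C L) y"
  obtain f s g t h k where xd: "x = ((f,s),(g,t),h,k)" using LMap_arr_tuple x by blast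
  obtain g' t' u v h' k' where yd: "y = ((g',t'),(u,v),h',k')" using LMap_arr_tuple y by blast
  have "fa GU (cmp (LMap C L) y x) = cmp (arrow_cat C) (fa GU y) (fa GU x)"
    using xy unfolding xd yd by (simp add: GU_def)}
  note A4 = this
  show ?thesis unfolding is_functor_def using A1 A2 A3 A4 by blast
qed

lemma Gob_over: "comonad_dom C L \<Longrightarrow> over_cat C (Gob C L)"
  unfolding over_cat_def Gob_def using LMap_category GU_functor by simp

end

context ctx begin

lemma mor_t[simp]: "comon_mor C L L' a \<Longrightarrow> f \<in> arr C \<Longrightarrow> a f \<in> arr C"
   "comon_mor C L L' a \<Longrightarrow> f \<in> arr C \<Longrightarrow> dm C (a f) = E0 L f"
   "comon_mor C L L' a \<Longrightarrow> f \<in> arr C \<Longrightarrow> cd C (a f) = E0 L' f"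
  unfolding comon_mor_def hom_def by auto
lemma mor_nat: "comon_mor C L L' a \<Longrightarrow> sqc C f g h k \<Longrightarrow>
   cmp C (a g) (E1 L (f,g,h,k)) = cmp C (E1 L' (f,g,h,k)) (a f)"
  unfolding comon_mor_def sqc_def by blast
lemma mor_lam[simp]: "comon_mor C L L' a \<Longrightarrow> f \<in> arr C \<Longrightarrow> cmp C (a f) (lam L f) = lam L' f"
  unfolding comon_mor_def by blast
lemma mor_rho[simp]: "comon_mor C L L' a \<Longrightarrow> f \<in> arr C \<Longrightarrow> cmp C (rho L' f) (a f) = rho L f"
  unfolding comon_mor_def by blast
lemma mor_sig: "comon_mor C L L' a \<Longrightarrow> f \<in> arr C \<Longrightarrow> cmp C (sig L' f) (a f)
        = cmp C (a (lam L' f)) (cmp C (E1 L (lam L f, lam L' f, idn C (dm C f), a f)) (sig L f))"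
  unfolding comon_mor_def by blast

lemma Gmor_obj:
  assumes L: "comonad_dom C L" and L': "comonad_dom C L'" and a: "comon_mor C L L' a"
    and x: "(f,s) \<in> obj (LMap C L)"
  shows "(f, cmp C (a f) s) \<in> obj (LMap C L')"
proof -
  have f: "f \<in> arr C" and s: "s \<in> arr C" "dm C s = cd C f" "cd C s = E0 L f"
    and sf: "cmp C s f = lam L f" and rs: "cmp C (rho L f) s = idn C (cd C f)"
    and ss: "cmp C (sig L f) s = cmp C (E1 L (f, lam L f, idn C (dm C f), s)) s"
    using x unfolding LMap_obj by auto
  have q1: "sqc C f (lam L f) (idn C (dm C f)) s" using f s L sf unfolding sqc_iff by simp
  have q2: "sqc C (lam L f) (lam L' f) (idn C (dm C f)) (a f)" using f L L' a unfolding sqc_iff by simp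
  have q3: "sqc C f (lam L' f) (idn C (dm C f)) (cmp C (a f) s)"
    using sqc_comp[OF q1 q2] f by simp
  have c1: "cmp C (cmp C (a f) s) f = lam L' f"
  proof -
    have "cmp C (cmp C (a f) s) f = cmp C (a f) (cmp C s f)" using f s a by simp
    then show ?thesis using sf a f by simp
  qed
  have c2: "cmp C (rho L' f) (cmp C (a f) s) = idn C (cd C f)"
  proof -
    have "cmp C (rho L' f) (cmp C (a f) s) = cmp C (cmp C (rho L' f) (a f)) s"
      by (intro assoc[symmetric]) (use f s a L' in simp_all)
    also have "\<dots> = idn C (cd C f)" using rs a f by simp
    finally show ?thesis .
  qed
  have c3: "cmp C (sig L' f) (cmp C (a f) s) = cmp C (E1 L' (f, lam L' f, idn C (dm C f), cmp C (a f) s)) (cmp C (a f) s)"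
  proof -
    have "cmp C (sig L' f) (cmp C (a f) s) = cmp C (cmp C (sig L' f) (a f)) s"
      by (intro assoc[symmetric]) (use f s a L' in simp_all)
    also have "\<dots> = cmp C (a (lam L' f)) (cmp C (E1 L (lam L f, lam L' f, idn C (dm C f), a f)) (cmp C (sig L f) s))"
      using mor_sig[OF a f] f s a L L' q2 by simp
    also have "\<dots> = cmp C (a (lam L' f)) (cmp C (E1 L (lam L f, lam L' f, idn C (dm C f), a f)) (cmp C (E1 L (f, lam L f, idn C (dm C f), s)) s))"
      using ss by simp
    also have "\<dots> = cmp C (a (lam L' f)) (cmp C (E1 L (f, lam L' f, idn C (dm C f), cmp C (a f) s)) s)"
      using f s L L' a q1 q2 by (simp add: cont1[OF E1_comp[OF L q1 q2]])
    also have "\<dots> = cmp C (cmp C (a (lam L' f)) (E1 L (f, lam L' f, idn C (dm C f), cmp C (a f) s))) s"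
      using f s L L' a q3 by simp
    also have "\<dots> = cmp C (cmp C (E1 L' (f, lam L' f, idn C (dm C f), cmp C (a f) s)) (a f)) s"
      using mor_nat[OF a q3] by simp
    also have "\<dots> = cmp C (E1 L' (f, lam L' f, idn C (dm C f), cmp C (a f) s)) (cmp C (a f) s)"
      using f s L L' a q3 by simp
    finally show ?thesis .
  qed
  show ?thesis unfolding LMap_obj using f s a c1 c2 c3 by simp
qed

lemma Gmor_arr:
  assumes L: "comonad_dom C L" and L': "comonad_dom C L'" and a: "comon_mor C L L' a"
    and x: "((f,s),(g,t),h,k) \<in> arr (LMap C L)"
  shows "((f, cmp C (a f) s),(g, cmp C (a g) t),h,k) \<in> arr (LMap C L')"
proof -
  have xs: "(f,s) \<in> obj (LMap C L)" "(g,t) \<in> obj (LMap C L)" and q: "sqc C f g h k"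
    and e: "cmp C t k = cmp C (E1 L (f,g,h,k)) s" using x unfolding LMap_arr by auto
  have s: "s \<in> arr C" "dm C s = cd C f" "cd C s = E0 L f" "t \<in> arr C" "dm C t = cd C g" "cd C t = E0 L g"
    using xs unfolding LMap_obj by auto
  note qa = sqc_arr[OF q]
  have "cmp C (cmp C (a g) t) k = cmp C (a g) (cmp C t k)" using qa s a by simp
  also have "\<dots> = cmp C (cmp C (a g) (E1 L (f,g,h,k))) s" using e qa s a L q by simp
  also have "\<dots> = cmp C (E1 L' (f,g,h,k)) (cmp C (a f) s)" using mor_nat[OF a q] qa s a L L' q by simp
  finally show ?thesis unfolding LMap_arr using Gmor_obj[OF L L' a] xs q by simp
qed

lemma Gmor_over: assumes L: "comonad_dom C L" and L': "comonad_dom C L'" and a: "comon_mor C L L' a"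
  shows "over_functor (Gob C L) (Gob C L') (Gmor C a)"
proof -
  {fix X assume X: "X \<in> obj (LMap C L)"
   obtain f s where Xd: "X = (f,s)" by (cases X)
   have "fo (Gmor C a) X \<in> obj (LMap C L')" "fo GU (fo (Gmor C a) X) = fo GU X"
     using Gmor_obj[OF L L' a] X unfolding Xd by (auto simp: Gmor_def GU_def)}
  note A1 = this
  {fix x assume x: "x \<in> arr (LMap C L)"
   obtain f s g t h k where xd: "x = ((f,s),(g,t),h,k)" using LMap_arr_tuple x by blast
   have "fa (Gmor C a) x \<in> arr (LMap C L') \<and> dm (LMap C L') (fa (Gmor C a) x) = fo (Gmor C a) (dm (LMap C L) x) \<and>
        cd (LMap C L') (fa (Gmor C a) x) = fo (Gmor C a) (cd (LMap C L) x)"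
        "fa GU (fa (Gmor C a) x) = fa GU x"
     using Gmor_arr[OF L L' a] x unfolding xd by (auto simp: Gmor_def GU_def)}
  note A2 = this
  {fix X assume X: "X \<in> obj (LMap C L)"
   obtain f s where Xd: "X = (f,s)" by (cases X)
   have "fa (Gmor C a) (idn (LMap C L) X) = idn (LMap C L') (fo (Gmor C a) X)"
     unfolding Xd by (simp add: Gmor_def)}
  note A3 = this
  {fix x y assume x: "x \<in> arr (LMap C L)" and y: "y \<in> arr (LMap C L)" and xy: "cd (LMap C L) x = dm (LMap C L) y"
  obtain f s g t h k where xd: "x = ((f,s),(g,t),h,k)" using LMap_arr_tuple x by blast
  obtain g' t' u v h' k' where yd: "y = ((g',t'),(u,v),h',k')" using LMap_arr_tuple y by blast
  have "fa (Gmor C a) (cmp (LMap C L) y x) = cmp (LMap C L') (fa (Gmor C a) y) (fa (Gmor C a) x)"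
    using xy unfolding xd yd by (simp add: Gmor_def)}
  note A4 = this
  show ?thesis unfolding over_functor_def is_functor_def Gob_def fst_conv snd_conv
    using A1 A2 A3 A4 by blast
qed

end

definition secT :: "('o,'m) cat \<Rightarrow> ('o,'m) comon \<Rightarrow> ('o,'m) comon \<Rightarrow> 'm \<Rightarrow> 'm \<Rightarrow> 'm \<Rightarrow> 'm \<Rightarrow> 'm" where
  "secT C L2 L1 f s g t = cmp C (E1 L2 (g, rho L1 (cmp C g f),
      cmp C (E1 L1 (f, cmp C g f, idn C (dm C f), g)) s, idn C (cd C g))) t"

lemma tens_simps[simp]:
  "E0 (tens C L2 L1) f = E0 L2 (rho L1 f)"
  "E1 (tens C L2 L1) (f,g,h,k) = E1 L2 (rho L1 f, rho L1 g, E1 L1 (f,g,h,k), k)"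
  "lam (tens C L2 L1) f = cmp C (lam L2 (rho L1 f)) (lam L1 f)"
  "rho (tens C L2 L1) f = rho L2 (rho L1 f)"
  unfolding tens_def Let_def E0_def E1_def by simp_all

lemma tens_sig:
  "sig (tens C L2 L1) f = cmp C
                   (E1 L2 (cmp C (lam L2 (rho L1 f)) (rho L1 (lam L1 f)), rho L1 (cmp C (lam L2 (rho L1 f)) (lam L1 f)),
                           E1 L1 (lam L1 f, cmp C (lam L2 (rho L1 f)) (lam L1 f), idn C (dm C f), lam L2 (rho L1 f)),
                           idn C (E0 L2 (rho L1 f))))
                   (cmp C (E1 L2 (lam L2 (rho L1 f), cmp C (lam L2 (rho L1 f)) (rho L1 (lam L1 f)), sig L1 f, idn C (E0 L2 (rho L1 f))))
                          (sig L2 (rho L1 f)))"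
  unfolding tens_def Let_def by simp

context ctx begin

lemma phi_obj:
  assumes L1: "comonad_dom C L1" and L2: "comonad_dom C L2"
    and x1: "(f,s) \<in> obj (LMap C L1)" and x2: "(g,t) \<in> obj (LMap C L2)" and fg: "cd C f = dm C g"
  shows "(cmp C g f, secT C L2 L1 f s g t) \<in> obj (LMap C (tens C L2 L1))"
proof -
  have f: "f \<in> arr C" and s: "s \<in> arr C" "dm C s = cd C f" "cd C s = E0 L1 f"
    and sf: "cmp C s f = lam L1 f" and rs: "cmp C (rho L1 f) s = idn C (cd C f)"
    and ss: "cmp C (sig L1 f) s = cmp C (E1 L1 (f, lam L1 f, idn C (dm C f), s)) s"
    using x1 unfolding LMap_obj by auto
  have g: "g \<in> arr C" and t: "t \<in> arr C" "dm C t = cd C g" "cd C t = E0 L2 g"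
    and tg: "cmp C t g = lam L2 g" and rt: "cmp C (rho L2 g) t = idn C (cd C g)"
    and st: "cmp C (sig L2 g) t = cmp C (E1 L2 (g, lam L2 g, idn C (dm C g), t)) t"
    using x2 unfolding LMap_obj by auto
  define F where "F = cmp C g f"
  have F: "F \<in> arr C" "dm C F = dm C f" "cd C F = cd C g" using f g fg unfolding F_def by auto
  note [simp] = f g s t L1 L2 F
  have sqA: "sqc C f F (idn C (dm C f)) g" using f g fg F unfolding sqc_iff F_def by simp
  define a where "a = cmp C (E1 L1 (f,F,idn C (dm C f),g)) s"
  have a: "a \<in> arr C" "dm C a = cd C f" "cd C a = E0 L1 F" using sqA s L1 F unfolding a_def by auto
  note [simp] = a
  have ra: "cmp C (rho L1 F) a = g"
  proof -
    have "cmp C (rho L1 F) a = cmp C (cmp C (rho L1 F) (E1 L1 (f,F,idn C (dm C f),g))) s"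
      unfolding a_def by (intro assoc[symmetric]) (use sqA s L1 F in simp_all)
    also have "\<dots> = cmp C (cmp C g (rho L1 f)) s" by (simp only: nat_rho[OF L1 sqA])
    also have "\<dots> = cmp C g (cmp C (rho L1 f) s)" using f g fg s L1 by simp
    also have "\<dots> = g" using rs g fg by simp
    finally show ?thesis .
  qed
  have sqB: "sqc C g (rho L1 F) a (idn C (cd C g))" using g F a ra L1 fg unfolding sqc_iff by simp
  define S where "S = cmp C (E1 L2 (g, rho L1 F, a, idn C (cd C g))) t"
  have S: "S \<in> arr C" "dm C S = cd C g" "cd C S = E0 L2 (rho L1 F)" using sqB t L2 L1 F unfolding S_def by auto
  note [simp] = S
  have sec: "secT C L2 L1 f s g t = S" unfolding secT_def S_def a_def F_def ..
  have Sg: "cmp C S g = cmp C (lam L2 (rho L1 F)) a"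
  proof -
    have "cmp C S g = cmp C (E1 L2 (g, rho L1 F, a, idn C (cd C g))) (cmp C t g)"
      unfolding S_def using sqB t g L2 by simp
    also have "\<dots> = cmp C (lam L2 (rho L1 F)) a" using tg nat_lam[OF L2 sqB] by simp
    finally show ?thesis .
  qed
  have c1: "cmp C S F = lam (tens C L2 L1) F"
  proof -
    have "cmp C S F = cmp C (cmp C S g) f" unfolding F_def using S f g fg by simp
    also have "\<dots> = cmp C (lam L2 (rho L1 F)) (cmp C a f)" unfolding Sg using a f L1 L2 F by simp
    also have "cmp C a f = cmp C (E1 L1 (f,F,idn C (dm C f),g)) (lam L1 f)"
      unfolding a_def using sf sqA s f L1 by simp
    also have "\<dots> = lam L1 F" using nat_lam[OF L1 sqA] F L1 by simp
    finally show ?thesis by simp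
  qed
  have c2: "cmp C (rho (tens C L2 L1) F) S = idn C (cd C F)"
  proof -
    have "cmp C (rho (tens C L2 L1) F) S = cmp C (cmp C (rho L2 (rho L1 F)) (E1 L2 (g, rho L1 F, a, idn C (cd C g)))) t"
      unfolding S_def tens_simps by (intro assoc[symmetric]) (use sqB t L2 L1 F in simp_all)
    also have "\<dots> = cmp C (cmp C (idn C (cd C g)) (rho L2 g)) t" by (simp only: nat_rho[OF L2 sqB])
    also have "\<dots> = idn C (cd C F)" using rt g L2 F by simp
    finally show ?thesis .
  qed
  define lT where "lT = cmp C (lam L2 (rho L1 F)) (lam L1 F)"
  define tF where "tF = cmp C (lam L2 (rho L1 F)) (rho L1 (lam L1 F))"
  define e where "e = idn C (E0 L2 (rho L1 F))"
  have lT: "lT \<in> arr C" "dm C lT = dm C f" "cd C lT = E0 L2 (rho L1 F)" unfolding lT_def using L1 L2 F by auto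
  have tF: "tF \<in> arr C" "dm C tF = E0 L1 (lam L1 F)" "cd C tF = E0 L2 (rho L1 F)" unfolding tF_def using L1 L2 F by auto
  have e: "e \<in> arr C" "dm C e = E0 L2 (rho L1 F)" "cd C e = E0 L2 (rho L1 F)" unfolding e_def using L1 L2 F by auto
  note [simp] = lT tF e
  have sqL: "sqc C (lam L1 F) lT (idn C (dm C f)) (lam L2 (rho L1 F))"
    unfolding sqc_iff using lT L1 L2 F by (simp add: lT_def)
  have sqT1: "sqc C tF (rho L1 lT) (E1 L1 (lam L1 F, lT, idn C (dm C f), lam L2 (rho L1 F))) e"
  proof -
    have "cmp C (rho L1 lT) (E1 L1 (lam L1 F, lT, idn C (dm C f), lam L2 (rho L1 F))) = tF"
      using nat_rho[OF L1 sqL] unfolding tF_def by simp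
    then show ?thesis unfolding sqc_iff using lT tF e sqL L1 L2 F by (simp add: e_def)
  qed
  have sqT2: "sqc C (lam L2 (rho L1 F)) tF (sig L1 F) e"
  proof -
    have "cmp C tF (sig L1 F) = lam L2 (rho L1 F)" unfolding tF_def using L1 L2 F by simp
    then show ?thesis unfolding sqc_iff using tF e L1 L2 F by (simp add: e_def)
  qed
  have sqB': "sqc C (lam L2 g) (lam L2 (rho L1 F)) a (E1 L2 (g, rho L1 F, a, idn C (cd C g)))"
    unfolding sqc_iff using nat_lam[OF L2 sqB] sqB a g L1 L2 F fg by simp
  have sqt: "sqc C g (lam L2 g) (idn C (dm C g)) t" unfolding sqc_iff using tg g t L2 by simp
  have sqS: "sqc C F lT (idn C (dm C f)) S" unfolding sqc_iff using c1 lT S F L1 L2 by (simp add: lT_def)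
  have sqBig: "sqc C (rho L1 F) (rho L1 lT) (E1 L1 (F, lT, idn C (dm C f), S)) S"
    unfolding sqc_iff using nat_rho[OF L1 sqS] sqS lT S F L1 L2 by simp
  have sqAl: "sqc C (lam L1 f) (lam L1 F) (idn C (dm C f)) (E1 L1 (f,F,idn C (dm C f),g))"
    unfolding sqc_iff using nat_lam[OF L1 sqA] sqA f F L1 by simp
  have sqs: "sqc C f (lam L1 f) (idn C (dm C f)) s" unfolding sqc_iff using sf f s L1 by simp
  have key: "cmp C (E1 L1 (lam L1 F, lT, idn C (dm C f), lam L2 (rho L1 F))) (cmp C (sig L1 F) a)
      = cmp C (E1 L1 (F, lT, idn C (dm C f), S)) a"
  proof -
    have "cmp C (sig L1 F) a = cmp C (E1 L1 (lam L1 f, lam L1 F, idn C (dm C f), E1 L1 (f,F,idn C (dm C f),g))) (cmp C (sig L1 f) s)"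
      unfolding a_def using cont[OF nat_sig[OF L1 sqA]] sqA sqAl s f F L1 by simp
    also have "\<dots> = cmp C (E1 L1 (lam L1 f, lam L1 F, idn C (dm C f), E1 L1 (f,F,idn C (dm C f),g))) (cmp C (E1 L1 (f, lam L1 f, idn C (dm C f), s)) s)"
      using ss by simp
    also have "\<dots> = cmp C (E1 L1 (f, lam L1 F, idn C (dm C f), a)) s"
      using E1_cont[OF L1 sqs sqAl] s f L1 unfolding a_def by simp
    finally have 1: "cmp C (sig L1 F) a = cmp C (E1 L1 (f, lam L1 F, idn C (dm C f), a)) s" .
    have sqa: "sqc C f (lam L1 F) (idn C (dm C f)) a" using sqc_comp[OF sqs sqAl] f L1 unfolding a_def by simp
    have "cmp C (E1 L1 (lam L1 F, lT, idn C (dm C f), lam L2 (rho L1 F))) (cmp C (sig L1 F) a)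
       = cmp C (E1 L1 (f, lT, idn C (dm C f), cmp C (lam L2 (rho L1 F)) a)) s"
      unfolding 1 using E1_cont[OF L1 sqa sqL] s f L1 by simp
    also have "\<dots> = cmp C (E1 L1 (f, lT, idn C (dm C f), cmp C S g)) s" using Sg by simp
    also have "\<dots> = cmp C (E1 L1 (F, lT, idn C (dm C f), S)) a"
      using E1_cont[OF L1 sqA sqS] s f L1 unfolding a_def by simp
    finally show ?thesis .
  qed
  have c3: "cmp C (sig (tens C L2 L1) F) S = cmp C (E1 (tens C L2 L1) (F, lam (tens C L2 L1) F, idn C (dm C F), S)) S"
  proof -
    have "cmp C (sig (tens C L2 L1) F) S = cmp C (E1 L2 (tF, rho L1 lT, E1 L1 (lam L1 F, lT, idn C (dm C f), lam L2 (rho L1 F)), e))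
        (cmp C (E1 L2 (lam L2 (rho L1 F), tF, sig L1 F, e)) (cmp C (sig L2 (rho L1 F)) (cmp C (E1 L2 (g, rho L1 F, a, idn C (cd C g))) t)))"
      unfolding tens_sig S_def using sqT1 sqT2 sqB t L1 L2 F
      by (simp add: lT_def tF_def e_def)
    also have "\<dots> = cmp C (E1 L2 (tF, rho L1 lT, E1 L1 (lam L1 F, lT, idn C (dm C f), lam L2 (rho L1 F)), e))
        (cmp C (E1 L2 (lam L2 (rho L1 F), tF, sig L1 F, e)) (cmp C (E1 L2 (lam L2 g, lam L2 (rho L1 F), a, E1 L2 (g, rho L1 F, a, idn C (cd C g)))) (cmp C (sig L2 g) t)))"
      using cont[OF nat_sig[OF L2 sqB]] sqB sqB' t g L1 L2 F by simp
    also have "\<dots> = cmp C (E1 L2 (tF, rho L1 lT, E1 L1 (lam L1 F, lT, idn C (dm C f), lam L2 (rho L1 F)), e))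
        (cmp C (E1 L2 (lam L2 (rho L1 F), tF, sig L1 F, e)) (cmp C (E1 L2 (lam L2 g, lam L2 (rho L1 F), a, E1 L2 (g, rho L1 F, a, idn C (cd C g)))) (cmp C (E1 L2 (g, lam L2 g, idn C (dm C g), t)) t)))"
      using st by simp
    also have "\<dots> = cmp C (E1 L2 (g, rho L1 lT, cmp C (E1 L1 (lam L1 F, lT, idn C (dm C f), lam L2 (rho L1 F))) (cmp C (sig L1 F) a), S)) t"
    proof -
      have q1: "sqc C g (lam L2 (rho L1 F)) a (cmp C (E1 L2 (g, rho L1 F, a, idn C (cd C g))) t)"
        using sqc_comp[OF sqt sqB'] a g fg by simp
      have q2: "sqc C g tF (cmp C (sig L1 F) a) (cmp C (E1 L2 (g, rho L1 F, a, idn C (cd C g))) t)"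
        using sqc_comp[OF q1 sqT2] e S unfolding S_def by (simp add: e_def)
      show ?thesis
        using E1_cont[OF L2 sqt sqB'] E1_cont[OF L2 q1 sqT2] E1_cont[OF L2 q2 sqT1] sqt sqB' q1 q2 t a g fg e S L1 L2 F
        unfolding S_def by (simp add: e_def)
    qed
    also have "\<dots> = cmp C (E1 L2 (g, rho L1 lT, cmp C (E1 L1 (F, lT, idn C (dm C f), S)) a, S)) t"
      unfolding key ..
    also have "\<dots> = cmp C (E1 (tens C L2 L1) (F, lam (tens C L2 L1) F, idn C (dm C F), S)) S"
      using E1_cont[OF L2 sqB sqBig] t S g F unfolding S_def by (simp add: lT_def)
    finally show ?thesis .
  qed
  show ?thesis unfolding sec F_def[symmetric] LMap_obj using c1 c2 c3 F S L1 L2 by simp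
qed

end

context ctx begin

lemma sec_sq:
  assumes L1: "comonad_dom C L1"
    and x1: "(f,s) \<in> obj (LMap C L1)" and g: "g \<in> arr C" and fg: "cd C f = dm C g"
  shows "sqc C f (cmp C g f) (idn C (dm C f)) g"
    "sqc C g (rho L1 (cmp C g f)) (cmp C (E1 L1 (f,cmp C g f,idn C (dm C f),g)) s) (idn C (cd C g))"
proof -
  have f: "f \<in> arr C" and s: "s \<in> arr C" "dm C s = cd C f" "cd C s = E0 L1 f"
    and rs: "cmp C (rho L1 f) s = idn C (cd C f)"
    using x1 unfolding LMap_obj by auto
  define F where "F = cmp C g f"
  have F: "F \<in> arr C" "dm C F = dm C f" "cd C F = cd C g" using f g fg unfolding F_def by auto
  note [simp] = f g s L1 F
  show sqA: "sqc C f (cmp C g f) (idn C (dm C f)) g" using f g fg F unfolding sqc_iff F_def by simp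
  define a where "a = cmp C (E1 L1 (f,F,idn C (dm C f),g)) s"
  have a: "a \<in> arr C" "dm C a = cd C f" "cd C a = E0 L1 F" using sqA s L1 F unfolding a_def F_def by auto
  have ra: "cmp C (rho L1 F) a = g"
  proof -
    have "cmp C (rho L1 F) a = cmp C (cmp C (rho L1 F) (E1 L1 (f,F,idn C (dm C f),g))) s"
      unfolding a_def by (intro assoc[symmetric]) (use sqA s L1 F in \<open>simp_all add: F_def\<close>)
    also have "\<dots> = cmp C (cmp C g (rho L1 f)) s" using nat_rho[OF L1 sqA] by (simp only: F_def)
    also have "\<dots> = cmp C g (cmp C (rho L1 f) s)" using f g fg s L1 by simp
    also have "\<dots> = g" using rs g fg by simp
    finally show ?thesis .
  qed
  show "sqc C g (rho L1 (cmp C g f)) (cmp C (E1 L1 (f,cmp C g f,idn C (dm C f),g)) s) (idn C (cd C g))"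
    using g F a ra L1 fg unfolding sqc_iff a_def F_def by simp
qed

lemma phi_arr:
  assumes L1: "comonad_dom C L1" and L2: "comonad_dom C L2"
    and b: "((f,s),(f',s'),h,k) \<in> arr (LMap C L1)" and c: "((g,t),(g',t'),k,k2) \<in> arr (LMap C L2)"
  shows "((cmp C g f, secT C L2 L1 f s g t), (cmp C g' f', secT C L2 L1 f' s' g' t'), h, k2) \<in> arr (LMap C (tens C L2 L1))"
proof -
  have x1: "(f,s) \<in> obj (LMap C L1)" and x1': "(f',s') \<in> obj (LMap C L1)" and q1: "sqc C f f' h k"
    and e1: "cmp C s' k = cmp C (E1 L1 (f,f',h,k)) s" using b unfolding LMap_arr by auto
  have x2: "(g,t) \<in> obj (LMap C L2)" and x2': "(g',t') \<in> obj (LMap C L2)" and q2: "sqc C g g' k k2"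
    and e2: "cmp C t' k2 = cmp C (E1 L2 (g,g',k,k2)) t" using c unfolding LMap_arr by auto
  note a1 = sqc_arr[OF q1] and a2 = sqc_arr[OF q2]
  have fg: "cd C f = dm C g" and fg': "cd C f' = dm C g'" using a1 a2 by auto
  have s: "s \<in> arr C" "dm C s = cd C f" "cd C s = E0 L1 f" "s' \<in> arr C" "dm C s' = cd C f'" "cd C s' = E0 L1 f'"
    using x1 x1' unfolding LMap_obj by auto
  have t: "t \<in> arr C" "dm C t = cd C g" "cd C t = E0 L2 g" "t' \<in> arr C" "dm C t' = cd C g'" "cd C t' = E0 L2 g'"
    using x2 x2' unfolding LMap_obj by auto
  note sA = sec_sq[OF L1 x1 _ fg] and sA' = sec_sq[OF L1 x1' _ fg']
  note [simp] = a1 a2 s t L1 L2 fg fg'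
  have sqA: "sqc C f (cmp C g f) (idn C (dm C f)) g" and sqB: "sqc C g (rho L1 (cmp C g f)) (cmp C (E1 L1 (f,cmp C g f,idn C (dm C f),g)) s) (idn C (cd C g))"
    using sA by auto
  have sqA': "sqc C f' (cmp C g' f') (idn C (dm C f')) g'" and sqB': "sqc C g' (rho L1 (cmp C g' f')) (cmp C (E1 L1 (f',cmp C g' f',idn C (dm C f'),g')) s') (idn C (cd C g'))"
    using sA' by auto
  have comm2: "cmp C g' k = cmp C k2 g" using q2 by (rule sqc_comm)
  have qF: "sqc C (cmp C g f) (cmp C g' f') h k2"
  proof -
    have "cmp C (cmp C g' f') h = cmp C g' (cmp C f' h)" by simp
    also have "\<dots> = cmp C g' (cmp C k f)" using sqc_comm[OF q1] by simp
    also have "\<dots> = cmp C (cmp C g' k) f" by (intro assoc[symmetric]) simp_all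
    also have "\<dots> = cmp C k2 (cmp C g f)" unfolding comm2 by simp
    finally show ?thesis unfolding sqc_iff by simp
  qed
  have qBig: "sqc C (rho L1 (cmp C g f)) (rho L1 (cmp C g' f')) (E1 L1 (cmp C g f, cmp C g' f', h, k2)) k2"
    unfolding sqc_iff using nat_rho[OF L1 qF] qF by (simp add: sqc_iff)
  have key: "cmp C (cmp C (E1 L1 (f',cmp C g' f',idn C (dm C f'),g')) s') k
      = cmp C (E1 L1 (cmp C g f, cmp C g' f', h, k2)) (cmp C (E1 L1 (f,cmp C g f,idn C (dm C f),g)) s)"
  proof -
    have "cmp C (cmp C (E1 L1 (f',cmp C g' f',idn C (dm C f'),g')) s') k
        = cmp C (E1 L1 (f',cmp C g' f',idn C (dm C f'),g')) (cmp C s' k)" using sqA' by simp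
    also have "\<dots> = cmp C (E1 L1 (f, cmp C g' f', h, cmp C g' k)) s"
      unfolding e1 using E1_cont[OF L1 q1 sqA'] by simp
    also have "\<dots> = cmp C (E1 L1 (cmp C g f, cmp C g' f', h, k2)) (cmp C (E1 L1 (f,cmp C g f,idn C (dm C f),g)) s)"
      unfolding comm2 using E1_cont[OF L1 sqA qF] by simp
    finally show ?thesis .
  qed
  have main: "cmp C (secT C L2 L1 f' s' g' t') k2 = cmp C (E1 (tens C L2 L1) (cmp C g f, cmp C g' f', h, k2)) (secT C L2 L1 f s g t)"
  proof -
    have "cmp C (secT C L2 L1 f' s' g' t') k2 = cmp C (E1 L2 (g', rho L1 (cmp C g' f'),
      cmp C (E1 L1 (f', cmp C g' f', idn C (dm C f'), g')) s', idn C (cd C g'))) (cmp C (E1 L2 (g,g',k,k2)) t)"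
      unfolding secT_def e2[symmetric] using sqB' by simp
    also have "\<dots> = cmp C (E1 L2 (g, rho L1 (cmp C g' f'),
      cmp C (cmp C (E1 L1 (f', cmp C g' f', idn C (dm C f'), g')) s') k, k2)) t"
      using E1_cont[OF L2 q2 sqB'] sqB' by (simp del: assoc)
    also have "\<dots> = cmp C (E1 L2 (g, rho L1 (cmp C g' f'),
      cmp C (E1 L1 (cmp C g f, cmp C g' f', h, k2)) (cmp C (E1 L1 (f,cmp C g f,idn C (dm C f),g)) s), k2)) t"
      unfolding key ..
    also have "\<dots> = cmp C (E1 (tens C L2 L1) (cmp C g f, cmp C g' f', h, k2)) (secT C L2 L1 f s g t)"
      unfolding secT_def tens_simps using E1_cont[OF L2 sqB qBig] sqB by simp
    finally show ?thesis .
  qed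
  show ?thesis unfolding LMap_arr using phi_obj[OF L1 L2 x1 x2 fg] phi_obj[OF L1 L2 x1' x2' fg'] qF main
    by (simp only: sqc_def simp_thms)
qed

end

definition phiF :: "('o,'m) cat \<Rightarrow> ('o,'m) comon \<Rightarrow> ('o,'m) comon \<Rightarrow>
    (('m \<times> 'm) \<times> ('m \<times> 'm), 'm gmor \<times> 'm gmor, 'm \<times> 'm, 'm gmor) ftr" where
  "phiF C L2 L1 = \<lparr> fo = (\<lambda>((f,s),(g,t)). (cmp C g f, secT C L2 L1 f s g t)),
     fa = (\<lambda>(((f,s),(f',s'),h,k),((g,t),(g',t'),h2,k2)).
            ((cmp C g f, secT C L2 L1 f s g t), (cmp C g' f', secT C L2 L1 f' s' g' t'), h, k2)) \<rparr>"

definition phi0F :: "('o,'m) cat \<Rightarrow> ('o, 'm, 'm \<times> 'm, 'm gmor) ftr" where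
  "phi0F C = \<lparr> fo = (\<lambda>X. (idn C X, idn C X)),
     fa = (\<lambda>m. ((idn C (dm C m), idn C (dm C m)), (idn C (cd C m), idn C (cd C m)), m, m)) \<rparr>"

lemma bullet_simps:
  "obj (fst (bullet C A B)) = {(b,a). b \<in> obj (fst B) \<and> a \<in> obj (fst A) \<and> cd C (fo (snd B) b) = dm C (fo (snd A) a)}"
  "arr (fst (bullet C A B)) = {(\<beta>,\<alpha>). \<beta> \<in> arr (fst B) \<and> \<alpha> \<in> arr (fst A) \<and> sq_k (fa (snd B) \<beta>) = sq_h (fa (snd A) \<alpha>)}"
  "dm (fst (bullet C A B)) (\<beta>,\<alpha>) = (dm (fst B) \<beta>, dm (fst A) \<alpha>)"
  "cd (fst (bullet C A B)) (\<beta>,\<alpha>) = (cd (fst B) \<beta>, cd (fst A) \<alpha>)"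
  "idn (fst (bullet C A B)) (b,a) = (idn (fst B) b, idn (fst A) a)"
  "cmp (fst (bullet C A B)) (\<beta>',\<alpha>') (\<beta>,\<alpha>) = (cmp (fst B) \<beta>' \<beta>, cmp (fst A) \<alpha>' \<alpha>)"
  "fo (snd (bullet C A B)) (b,a) = cmp C (fo (snd A) a) (fo (snd B) b)"
  "fa (snd (bullet C A B)) (\<beta>,\<alpha>) = (cmp C (fo (snd A) (dm (fst A) \<alpha>)) (fo (snd B) (dm (fst B) \<beta>)),
                         cmp C (fo (snd A) (cd (fst A) \<alpha>)) (fo (snd B) (cd (fst B) \<beta>)),
                         sq_h (fa (snd B) \<beta>), sq_k (fa (snd A) \<alpha>))"
  unfolding bullet_def Let_def by auto

lemma Gob_simps[simp]: "fst (Gob C L) = LMap C L" "snd (Gob C L) = GU"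
  unfolding Gob_def by auto
lemma GU_simps[simp]: "fo GU (f,s) = f" "fa GU ((f,s),(g,t),h,k) = (f,g,h,k)"
  unfolding GU_def by auto
lemma sq_simps[simp]: "sq_h (f,g,h,k) = h" "sq_k (f,g,h,k) = k" unfolding sq_h_def sq_k_def by auto

lemma phiF_simps[simp]: "fo (phiF C L2 L1) ((f,s),(g,t)) = (cmp C g f, secT C L2 L1 f s g t)"
  "fa (phiF C L2 L1) (((f,s),(f',s'),h,k),((g,t),(g',t'),h2,k2)) =
            ((cmp C g f, secT C L2 L1 f s g t), (cmp C g' f', secT C L2 L1 f' s' g' t'), h, k2)"
  unfolding phiF_def by auto

lemma Gmor_simps[simp]: "fo (Gmor C a) (f,s) = (f, cmp C (a f) s)"
   "fa (Gmor C a) ((f,s),(g,t),h,k) = ((f, cmp C (a f) s), (g, cmp C (a g) t), h, k)"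
  unfolding Gmor_def by auto

lemma unitC_simps[simp]: "E0 (unitC C) f = dm C f" "E1 (unitC C) (f,g,h,k) = h"
  "lam (unitC C) f = idn C (dm C f)" "rho (unitC C) f = f" "sig (unitC C) f = idn C (dm C f)"
  unfolding unitC_def E0_def E1_def by auto

lemma unitI_simps[simp]: "fst (unitI C) = C" "fo (snd (unitI C)) X = idn C X"
  "fa (snd (unitI C)) m = (idn C (dm C m), idn C (cd C m), m, m)"
  unfolding unitI_def by auto

context ctx begin

lemma phi_over: assumes L1: "comonad_dom C L1" and L2: "comonad_dom C L2"
  shows "over_functor (bullet C (Gob C L2) (Gob C L1)) (Gob C (tens C L2 L1)) (phiF C L2 L1)"
proof -
  let ?B = "fst (bullet C (Gob C L2) (Gob C L1))"
  {fix x assume x: "x \<in> obj ?B"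
   then obtain f s g t where xd: "x = ((f,s),(g,t))" by (metis prod.exhaust)
   have "fo (phiF C L2 L1) x \<in> obj (LMap C (tens C L2 L1))" "fo GU (fo (phiF C L2 L1) x) = fo (snd (bullet C (Gob C L2) (Gob C L1))) x"
     using x phi_obj[OF L1 L2] unfolding xd bullet_simps by auto}
  note A1 = this
  {fix x assume x: "x \<in> arr ?B"
   then obtain b c where xd: "x = (b,c)" by (metis prod.exhaust)
   have b: "b \<in> arr (LMap C L1)" and c: "c \<in> arr (LMap C L2)" using x unfolding xd bullet_simps by auto
   obtain f s f' s' h k where bd: "b = ((f,s),(f',s'),h,k)" using LMap_arr_tuple b by blast
   obtain g t g' t' h2 k2 where cd: "c = ((g,t),(g',t'),h2,k2)" using LMap_arr_tuple c by blast
   have kh: "h2 = k" using x unfolding xd bd cd bullet_simps by auto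
   have "fa (phiF C L2 L1) x \<in> arr (LMap C (tens C L2 L1)) \<and>
        dm (LMap C (tens C L2 L1)) (fa (phiF C L2 L1) x) = fo (phiF C L2 L1) (dm ?B x) \<and>
        cd (LMap C (tens C L2 L1)) (fa (phiF C L2 L1) x) = fo (phiF C L2 L1) (cd ?B x)"
     "fa GU (fa (phiF C L2 L1) x) = fa (snd (bullet C (Gob C L2) (Gob C L1))) x"
     using phi_arr[OF L1 L2] b c unfolding xd bd cd kh by (auto simp: bullet_simps)}
  note A2 = this
  {fix x assume x: "x \<in> obj ?B"
   then obtain f s g t where xd: "x = ((f,s),(g,t))" by (metis prod.exhaust)
   have "fa (phiF C L2 L1) (idn ?B x) = idn (LMap C (tens C L2 L1)) (fo (phiF C L2 L1) x)"
     using x unfolding xd bullet_simps by (auto simp: LMap_obj)}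
  note A3 = this
  {fix x y assume x: "x \<in> arr ?B" and y: "y \<in> arr ?B"
   then obtain b c b' c' where xd: "x = (b,c)" "y = (b',c')" by (metis prod.exhaust)
   have b: "b \<in> arr (LMap C L1)" "b' \<in> arr (LMap C L1)" and c: "c \<in> arr (LMap C L2)" "c' \<in> arr (LMap C L2)"
     using x y unfolding xd bullet_simps by auto
   obtain f s f' s' h k where bd: "b = ((f,s),(f',s'),h,k)" using LMap_arr_tuple b by blast
   obtain g t g' t' h2 k2 where cd: "c = ((g,t),(g',t'),h2,k2)" using LMap_arr_tuple c by blast
   obtain f1 s1 f1' s1' h1 k1 where bd': "b' = ((f1,s1),(f1',s1'),h1,k1)" using LMap_arr_tuple b by blast
   obtain g1 t1 g1' t1' h21 k21 where cd': "c' = ((g1,t1),(g1',t1'),h21,k21)" using LMap_arr_tuple c by blast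
   have "fa (phiF C L2 L1) (cmp ?B y x) = cmp (LMap C (tens C L2 L1)) (fa (phiF C L2 L1) y) (fa (phiF C L2 L1) x)"
     unfolding xd bd cd bd' cd' by (simp add: bullet_simps)}
  note A4 = this
  show ?thesis unfolding over_functor_def is_functor_def Gob_simps
    using A1 A2 A3 A4 by blast
qed

end

context ctx begin

lemma phi0_over: "over_functor (unitI C) (Gob C (unitC C)) (phi0F C)"
proof -
  have ob: "(idn C X, idn C X) \<in> obj (LMap C (unitC C))" if "X \<in> obj C" for X
    using that by (simp add: LMap_obj)
  {fix m assume m: "m \<in> arr C"
   have "((idn C (dm C m), idn C (dm C m)), (idn C (cd C m), idn C (cd C m)), m, m) \<in> arr (LMap C (unitC C))"
     using m ob by (simp add: LMap_arr sqc_iff)}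
  note A2 = this
  show ?thesis unfolding over_functor_def is_functor_def Gob_simps unitI_simps
    using ob A2 by (auto simp: phi0F_def)
qed

lemma nat_obj:
  assumes L1: "comonad_dom C L1" and L2: "comonad_dom C L2" and L1': "comonad_dom C L1'" and L2': "comonad_dom C L2'"
    and be: "comon_mor C L2 L2' \<beta>" and al: "comon_mor C L1 L1' \<alpha>"
    and x1: "(f,s) \<in> obj (LMap C L1)" and x2: "(g,t) \<in> obj (LMap C L2)" and fg: "cd C f = dm C g"
  shows "secT C L2' L1' f (cmp C (\<alpha> f) s) g (cmp C (\<beta> g) t) = cmp C (tens_mor C L2 L1 L1' \<beta> \<alpha> (cmp C g f)) (secT C L2 L1 f s g t)"
proof -
  have f: "f \<in> arr C" and s: "s \<in> arr C" "dm C s = cd C f" "cd C s = E0 L1 f"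
    using x1 unfolding LMap_obj by auto
  have g: "g \<in> arr C" and t: "t \<in> arr C" "dm C t = cd C g" "cd C t = E0 L2 g"
    using x2 unfolding LMap_obj by auto
  define F where "F = cmp C g f"
  have F: "F \<in> arr C" "dm C F = dm C f" "cd C F = cd C g" using f g fg unfolding F_def by auto
  note [simp] = f g s t L1 L2 L1' L2' F be al fg mor_t[OF al] mor_t[OF be]
  note sA = sec_sq[OF L1 x1 g fg, folded F_def]
  have x1': "(f, cmp C (\<alpha> f) s) \<in> obj (LMap C L1')" using Gmor_obj[OF L1 L1' al x1] .
  note sA' = sec_sq[OF L1' x1' g fg, folded F_def]
  have aa: "cmp C (E1 L1' (f, F, idn C (dm C f), g)) (cmp C (\<alpha> f) s) = cmp C (\<alpha> F) (cmp C (E1 L1 (f, F, idn C (dm C f), g)) s)"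
    by (rule cont[OF mor_nat[OF al sA(1)], symmetric]) (use sA in simp_all)
  have sqB'': "sqc C g (rho L1' F) (cmp C (\<alpha> F) (cmp C (E1 L1 (f, F, idn C (dm C f), g)) s)) (idn C (cd C g))"
    using sA'(2) unfolding aa .
  have sqR: "sqc C (rho L1 F) (rho L1' F) (\<alpha> F) (idn C (cd C g))" unfolding sqc_iff by simp
  have "cmp C (tens_mor C L2 L1 L1' \<beta> \<alpha> F) (secT C L2 L1 f s g t)
      = cmp C (\<beta> (rho L1' F)) (cmp C (E1 L2 (rho L1 F, rho L1' F, \<alpha> F, idn C (cd C g)))
          (cmp C (E1 L2 (g, rho L1 F, cmp C (E1 L1 (f, F, idn C (dm C f), g)) s, idn C (cd C g))) t))"
    unfolding tens_mor_def secT_def F_def[symmetric] using sqR sA by simp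
  also have "\<dots> = cmp C (\<beta> (rho L1' F)) (cmp C (E1 L2 (g, rho L1' F, cmp C (\<alpha> F) (cmp C (E1 L1 (f, F, idn C (dm C f), g)) s), idn C (cd C g))) t)"
    using E1_cont[OF L2 sA(2) sqR] sA by simp
  also have "\<dots> = cmp C (E1 L2' (g, rho L1' F, cmp C (\<alpha> F) (cmp C (E1 L1 (f, F, idn C (dm C f), g)) s), idn C (cd C g))) (cmp C (\<beta> g) t)"
    by (rule cont[OF mor_nat[OF be sqB'']]) (use sqB'' in simp_all)
  also have "\<dots> = secT C L2' L1' f (cmp C (\<alpha> f) s) g (cmp C (\<beta> g) t)"
    unfolding secT_def F_def[symmetric] aa ..
  finally show ?thesis unfolding F_def by simp
qed

end

context ctx begin

lemma hex_obj:
  assumes L1: "comonad_dom C L1" and L2: "comonad_dom C L2" and L3: "comonad_dom C L3"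
    and x1: "(f,s) \<in> obj (LMap C L1)" and x2: "(g,t) \<in> obj (LMap C L2)" and x3: "(h,u) \<in> obj (LMap C L3)"
    and fg: "cd C f = dm C g" and gh: "cd C g = dm C h"
  shows "cmp C (idn C (E0 L3 (rho L2 (rho L1 (cmp C h (cmp C g f))))))
      (secT C (tens C L3 L2) L1 f s (cmp C h g) (secT C L3 L2 g t h u))
    = secT C L3 (tens C L2 L1) (cmp C g f) (secT C L2 L1 f s g t) h u"
proof -
  have f: "f \<in> arr C" and s: "s \<in> arr C" "dm C s = cd C f" "cd C s = E0 L1 f"
    using x1 unfolding LMap_obj by auto
  have g: "g \<in> arr C" and t: "t \<in> arr C" "dm C t = cd C g" "cd C t = E0 L2 g"
    using x2 unfolding LMap_obj by auto
  have h: "h \<in> arr C" and u: "u \<in> arr C" "dm C u = cd C h" "cd C u = E0 L3 h"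
    using x3 unfolding LMap_obj by auto
  note [simp] = f g h s t u L1 L2 L3 fg gh
  have hg: "cmp C h g \<in> arr C" "dm C (cmp C h g) = dm C g" "cd C (cmp C h g) = cd C h" by auto
  have gf: "cmp C g f \<in> arr C" "dm C (cmp C g f) = dm C f" "cd C (cmp C g f) = cd C g" by auto
  note [simp] = hg gf
  have fQ: "cd C f = dm C (cmp C h g)" by simp
  note sQ = sec_sq[OF L1 x1 hg(1) fQ]
  note sQs = sQ[simplified]
  note sB2 = sec_sq[OF L2 x2 h gh]
  have sN: "sqc C (rho L2 (cmp C h g)) (rho L2 (rho L1 (cmp C h (cmp C g f))))
     (E1 L2 (cmp C h g, rho L1 (cmp C h (cmp C g f)), cmp C (E1 L1 (f, cmp C h (cmp C g f), idn C (dm C f), cmp C h g)) s, idn C (cd C h))) (idn C (cd C h))"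
    by (subst sqc_iff) (use nat_rho[OF L2 sQs(2), symmetric] sQs(2) in simp)
  note sP = sec_sq[OF L1 x1 g fg]
  note [simp] = sQs sB2 sP sN
  have sqP: "sqc C (cmp C g f) (cmp C h (cmp C g f)) (idn C (dm C f)) h" unfolding sqc_iff by simp
  have sNP: "sqc C (rho L1 (cmp C g f)) (rho L1 (cmp C h (cmp C g f))) (E1 L1 (cmp C g f, cmp C h (cmp C g f), idn C (dm C f), h)) h"
    by (subst sqc_iff) (use nat_rho[OF L1 sqP, symmetric] sqP in simp)
  note [simp] = sqP sNP
  define X where "X = cmp C (E1 L3 (h, rho L2 (rho L1 (cmp C h (cmp C g f))),
     cmp C (E1 L2 (g, rho L1 (cmp C h (cmp C g f)), cmp C (E1 L1 (f, cmp C h (cmp C g f), idn C (dm C f), cmp C h g)) s, h)) t,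
     idn C (cd C h))) u"
  have sqX2: "sqc C g (rho L1 (cmp C h (cmp C g f))) (cmp C (E1 L1 (f, cmp C h (cmp C g f), idn C (dm C f), cmp C h g)) s) h"
    using sqc_comp[OF sB2(1) sQs(2)] by simp
  have sqX3: "sqc C h (rho L2 (rho L1 (cmp C h (cmp C g f))))
     (cmp C (E1 L2 (g, rho L1 (cmp C h (cmp C g f)), cmp C (E1 L1 (f, cmp C h (cmp C g f), idn C (dm C f), cmp C h g)) s, h)) t)
     (idn C (cd C h))"
    using sqc_comp[OF sB2(2) sN] E1_cont[OF L2 sB2(1) sQs(2)] by simp
  have lhs: "secT C (tens C L3 L2) L1 f s (cmp C h g) (secT C L3 L2 g t h u) = X"
  proof -
    have "secT C (tens C L3 L2) L1 f s (cmp C h g) (secT C L3 L2 g t h u) =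
      cmp C (E1 L3 (rho L2 (cmp C h g), rho L2 (rho L1 (cmp C h (cmp C g f))),
        E1 L2 (cmp C h g, rho L1 (cmp C h (cmp C g f)), cmp C (E1 L1 (f, cmp C h (cmp C g f), idn C (dm C f), cmp C h g)) s, idn C (cd C h)),
        idn C (cd C h)))
      (cmp C (E1 L3 (h, rho L2 (cmp C h g), cmp C (E1 L2 (g, cmp C h g, idn C (dm C g), h)) t, idn C (cd C h))) u)"
      unfolding secT_def tens_simps by simp
    also have "\<dots> = X" unfolding X_def
      using E1_cont[OF L3 sB2(2) sN] E1_cont[OF L2 sB2(1) sQs(2)] by simp
    finally show ?thesis .
  qed
  have rhs: "secT C L3 (tens C L2 L1) (cmp C g f) (secT C L2 L1 f s g t) h u = X"
  proof -
    have "secT C L3 (tens C L2 L1) (cmp C g f) (secT C L2 L1 f s g t) h u =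
      cmp C (E1 L3 (h, rho L2 (rho L1 (cmp C h (cmp C g f))),
        cmp C (E1 L2 (rho L1 (cmp C g f), rho L1 (cmp C h (cmp C g f)), E1 L1 (cmp C g f, cmp C h (cmp C g f), idn C (dm C f), h), h))
          (cmp C (E1 L2 (g, rho L1 (cmp C g f), cmp C (E1 L1 (f, cmp C g f, idn C (dm C f), g)) s, idn C (cd C g))) t),
        idn C (cd C h))) u"
      unfolding secT_def tens_simps by simp
    also have "\<dots> = X" unfolding X_def
      using E1_cont[OF L2 sP(2) sNP] E1_cont[OF L1 sP(1) sqP] sP by simp
    finally show ?thesis .
  qed
  have Xt: "cd C X = E0 L3 (rho L2 (rho L1 (cmp C h (cmp C g f))))" unfolding X_def using sqX3 by simp
  have Xa: "X \<in> arr C" unfolding X_def using sqX3 by simp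
  show ?thesis unfolding lhs rhs using Xt Xa by simp
qed

lemma lunit_obj: assumes L: "comonad_dom C L" and x: "(f,s) \<in> obj (LMap C L)"
  shows "secT C (unitC C) L f s (idn C (cd C f)) (idn C (cd C f)) = s"
proof -
  have f: "f \<in> arr C" and s: "s \<in> arr C" "dm C s = cd C f" "cd C s = E0 L f"
    using x unfolding LMap_obj by auto
  show ?thesis unfolding secT_def unitC_simps using f s L by simp
qed

lemma runit_obj: assumes L: "comonad_dom C L" and x: "(f,s) \<in> obj (LMap C L)"
  shows "secT C L (unitC C) (idn C (dm C f)) (idn C (dm C f)) f s = s"
proof -
  have f: "f \<in> arr C" and s: "s \<in> arr C" "dm C s = cd C f" "cd C s = E0 L f"
    using x unfolding LMap_obj by auto
  show ?thesis unfolding secT_def unitC_simps using f s L by simp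
qed

end

context ctx begin

lemma obj_parts: "(f,s) \<in> obj (LMap C L) \<Longrightarrow> f \<in> arr C \<and> s \<in> arr C \<and> dm C s = cd C f \<and> cd C s = E0 L f"
  unfolding LMap_obj by auto

lemma arr_parts: "((f,s),(f',s'),h,k) \<in> arr (LMap C L) \<Longrightarrow> (f,s) \<in> obj (LMap C L) \<and> (f',s') \<in> obj (LMap C L) \<and>
   f \<in> arr C \<and> f' \<in> arr C \<and> h \<in> arr C \<and> k \<in> arr C \<and> dm C h = dm C f \<and> cd C h = dm C f' \<and> dm C k = cd C f \<and> cd C k = cd C f'"
  unfolding LMap_arr using sqc_arr by blast

lemma naturality:
  assumes L1: "comonad_dom C L1" and L2: "comonad_dom C L2" and L1': "comonad_dom C L1'" and L2': "comonad_dom C L2'"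
    and be: "comon_mor C L2 L2' \<beta>" and al: "comon_mor C L1 L1' \<alpha>"
  shows "(\<forall>x\<in>obj (fst (bullet C (Gob C L2) (Gob C L1))).
           fo (phiF C L2' L1') (map_prod (fo (Gmor C \<alpha>)) (fo (Gmor C \<beta>)) x)
             = fo (Gmor C (tens_mor C L2 L1 L1' \<beta> \<alpha>)) (fo (phiF C L2 L1) x)) \<and>
        (\<forall>x\<in>arr (fst (bullet C (Gob C L2) (Gob C L1))).
           fa (phiF C L2' L1') (map_prod (fa (Gmor C \<alpha>)) (fa (Gmor C \<beta>)) x)
             = fa (Gmor C (tens_mor C L2 L1 L1' \<beta> \<alpha>)) (fa (phiF C L2 L1) x))"
proof (intro conjI ballI)
  fix x assume x: "x \<in> obj (fst (bullet C (Gob C L2) (Gob C L1)))"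
  then obtain f s g t where xd: "x = ((f,s),(g,t))" by (metis prod.exhaust)
  have x1: "(f,s) \<in> obj (LMap C L1)" and x2: "(g,t) \<in> obj (LMap C L2)" and fg: "cd C f = dm C g"
    using x unfolding xd by (auto simp: bullet_simps)
  show "fo (phiF C L2' L1') (map_prod (fo (Gmor C \<alpha>)) (fo (Gmor C \<beta>)) x)
             = fo (Gmor C (tens_mor C L2 L1 L1' \<beta> \<alpha>)) (fo (phiF C L2 L1) x)"
    unfolding xd using nat_obj[OF L1 L2 L1' L2' be al x1 x2 fg] by simp
next
  fix x assume x: "x \<in> arr (fst (bullet C (Gob C L2) (Gob C L1)))"
  then obtain b c where xd: "x = (b,c)" by (metis prod.exhaust)
  have b: "b \<in> arr (LMap C L1)" and c: "c \<in> arr (LMap C L2)" using x unfolding xd by (auto simp: bullet_simps)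
  obtain f s f' s' h k where bd: "b = ((f,s),(f',s'),h,k)" using LMap_arr_tuple b by blast
  obtain g t g' t' h2 k2 where cd: "c = ((g,t),(g',t'),h2,k2)" using LMap_arr_tuple c by blast
  have kh: "h2 = k" using x unfolding xd bd cd by (auto simp: bullet_simps)
  note pb = arr_parts[OF b[unfolded bd]] and pc = arr_parts[OF c[unfolded cd]]
  have fg: "cd C f = dm C g" "cd C f' = dm C g'" using pb pc kh by auto
  show "fa (phiF C L2' L1') (map_prod (fa (Gmor C \<alpha>)) (fa (Gmor C \<beta>)) x)
             = fa (Gmor C (tens_mor C L2 L1 L1' \<beta> \<alpha>)) (fa (phiF C L2 L1) x)"
    unfolding xd bd cd using nat_obj[OF L1 L2 L1' L2' be al _ _ fg(1)] nat_obj[OF L1 L2 L1' L2' be al _ _ fg(2)] pb pc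
    by simp
qed

lemma hexagon:
  assumes L1: "comonad_dom C L1" and L2: "comonad_dom C L2" and L3: "comonad_dom C L3"
  shows "(\<forall>x\<in>obj (fst (bullet C (bullet C (Gob C L3) (Gob C L2)) (Gob C L1))).
           fo (Gmor C (idc C (tens C (tens C L3 L2) L1)))
              (fo (phiF C (tens C L3 L2) L1) (map_prod id (fo (phiF C L3 L2)) x))
           = fo (phiF C L3 (tens C L2 L1)) (map_prod (fo (phiF C L2 L1)) id (reassoc x))) \<and>
        (\<forall>x\<in>arr (fst (bullet C (bullet C (Gob C L3) (Gob C L2)) (Gob C L1))).
           fa (Gmor C (idc C (tens C (tens C L3 L2) L1)))
              (fa (phiF C (tens C L3 L2) L1) (map_prod id (fa (phiF C L3 L2)) x))
           = fa (phiF C L3 (tens C L2 L1)) (map_prod (fa (phiF C L2 L1)) id (reassoc x)))"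
proof (intro conjI ballI)
  fix x assume x: "x \<in> obj (fst (bullet C (bullet C (Gob C L3) (Gob C L2)) (Gob C L1)))"
  then obtain f s g t h u where xd: "x = ((f,s),((g,t),(h,u)))" by (metis prod.exhaust)
  have x1: "(f,s) \<in> obj (LMap C L1)" and x2: "(g,t) \<in> obj (LMap C L2)" and x3: "(h,u) \<in> obj (LMap C L3)"
    and gh: "cd C g = dm C h" and fg0: "cd C f = dm C (cmp C h g)"
    using x unfolding xd by (auto simp: bullet_simps)
  have fg: "cd C f = dm C g" using fg0 gh obj_parts[OF x2] obj_parts[OF x3] by simp
  show "fo (Gmor C (idc C (tens C (tens C L3 L2) L1)))
              (fo (phiF C (tens C L3 L2) L1) (map_prod id (fo (phiF C L3 L2)) x))
           = fo (phiF C L3 (tens C L2 L1)) (map_prod (fo (phiF C L2 L1)) id (reassoc x))"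
    unfolding xd using hex_obj[OF L1 L2 L3 x1 x2 x3 fg gh] obj_parts[OF x1] obj_parts[OF x2] obj_parts[OF x3] fg gh
    by (simp add: reassoc_def idc_def)
next
  fix x assume x: "x \<in> arr (fst (bullet C (bullet C (Gob C L3) (Gob C L2)) (Gob C L1)))"
  then obtain b c d where xd: "x = (b,(c,d))" by (metis prod.exhaust)
  have b: "b \<in> arr (LMap C L1)" and c: "c \<in> arr (LMap C L2)" and d: "d \<in> arr (LMap C L3)"
    using x unfolding xd by (auto simp: bullet_simps)
  obtain f s f' s' hb kb where bd: "b = ((f,s),(f',s'),hb,kb)" using LMap_arr_tuple b by blast
  obtain g t g' t' hc kc where cd: "c = ((g,t),(g',t'),hc,kc)" using LMap_arr_tuple c by blast
  obtain h u h' u' hd kd where dd: "d = ((h,u),(h',u'),hd,kd)" using LMap_arr_tuple d by blast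
  have k1: "kb = hc" and k2: "kc = hd" using x unfolding xd bd cd dd by (auto simp: bullet_simps)
  note pb = arr_parts[OF b[unfolded bd]] and pc = arr_parts[OF c[unfolded cd]] and pd = arr_parts[OF d[unfolded dd]]
  have fg: "cd C f = dm C g" "cd C f' = dm C g'" and gh: "cd C g = dm C h" "cd C g' = dm C h'"
    using pb pc pd k1 k2 by auto
  show "fa (Gmor C (idc C (tens C (tens C L3 L2) L1)))
              (fa (phiF C (tens C L3 L2) L1) (map_prod id (fa (phiF C L3 L2)) x))
           = fa (phiF C L3 (tens C L2 L1)) (map_prod (fa (phiF C L2 L1)) id (reassoc x))"
    unfolding xd bd cd dd
    using hex_obj[OF L1 L2 L3 _ _ _ fg(1) gh(1)] hex_obj[OF L1 L2 L3 _ _ _ fg(2) gh(2)] pb pc pd fg gh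
    by (simp add: reassoc_def idc_def)
qed

lemma units:
  assumes L: "comonad_dom C L"
  shows "(\<forall>x\<in>obj (fst (bullet C (unitI C) (Gob C L))).
           fo (Gmor C (idc C (tens C (unitC C) L))) (fo (phiF C (unitC C) L) (map_prod id (fo (phi0F C)) x)) = fst x) \<and>
        (\<forall>x\<in>arr (fst (bullet C (unitI C) (Gob C L))).
           fa (Gmor C (idc C (tens C (unitC C) L))) (fa (phiF C (unitC C) L) (map_prod id (fa (phi0F C)) x)) = fst x) \<and>
        (\<forall>x\<in>obj (fst (bullet C (Gob C L) (unitI C))).
           fo (Gmor C (idc C (tens C L (unitC C)))) (fo (phiF C L (unitC C)) (map_prod (fo (phi0F C)) id x)) = snd x) \<and>
        (\<forall>x\<in>arr (fst (bullet C (Gob C L) (unitI C))).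
           fa (Gmor C (idc C (tens C L (unitC C)))) (fa (phiF C L (unitC C)) (map_prod (fa (phi0F C)) id x)) = snd x)"
proof (intro conjI ballI)
  fix x assume x: "x \<in> obj (fst (bullet C (unitI C) (Gob C L)))"
  then obtain f s Y where xd: "x = ((f,s),Y)" by (metis prod.exhaust)
  have x1: "(f,s) \<in> obj (LMap C L)" and Y: "Y \<in> obj C" "cd C f = dm C (idn C Y)"
    using x unfolding xd by (auto simp: bullet_simps)
  note p = obj_parts[OF x1]
  have Y': "Y = cd C f" using Y p by simp
  show "fo (Gmor C (idc C (tens C (unitC C) L))) (fo (phiF C (unitC C) L) (map_prod id (fo (phi0F C)) x)) = fst x"
    unfolding xd Y' using lunit_obj[OF L x1] p L by (simp add: idc_def phi0F_def)
next
  fix x assume x: "x \<in> arr (fst (bullet C (unitI C) (Gob C L)))"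
  then obtain b m where xd: "x = (b,m)" by (metis prod.exhaust)
  have b: "b \<in> arr (LMap C L)" and m: "m \<in> arr C" using x unfolding xd by (auto simp: bullet_simps)
  obtain f s f' s' h k where bd: "b = ((f,s),(f',s'),h,k)" using LMap_arr_tuple b by blast
  have km: "m = k" using x unfolding xd bd by (auto simp: bullet_simps)
  note pb = arr_parts[OF b[unfolded bd]]
  show "fa (Gmor C (idc C (tens C (unitC C) L))) (fa (phiF C (unitC C) L) (map_prod id (fa (phi0F C)) x)) = fst x"
    unfolding xd bd km using lunit_obj[OF L] pb obj_parts[of f s L] obj_parts[of f' s' L] L by (simp add: idc_def phi0F_def)
next
  fix x assume x: "x \<in> obj (fst (bullet C (Gob C L) (unitI C)))"
  then obtain f s X where xd: "x = (X,(f,s))" by (metis prod.exhaust)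
  have x1: "(f,s) \<in> obj (LMap C L)" and X: "X \<in> obj C" "cd C (idn C X) = dm C f"
    using x unfolding xd by (auto simp: bullet_simps)
  note p = obj_parts[OF x1]
  have X': "X = dm C f" using X p by simp
  show "fo (Gmor C (idc C (tens C L (unitC C)))) (fo (phiF C L (unitC C)) (map_prod (fo (phi0F C)) id x)) = snd x"
    unfolding xd X' using runit_obj[OF L x1] p L by (simp add: idc_def phi0F_def)
next
  fix x assume x: "x \<in> arr (fst (bullet C (Gob C L) (unitI C)))"
  then obtain b m where xd: "x = (m,b)" by (metis prod.exhaust)
  have b: "b \<in> arr (LMap C L)" and m: "m \<in> arr C" using x unfolding xd by (auto simp: bullet_simps)
  obtain f s f' s' h k where bd: "b = ((f,s),(f',s'),h,k)" using LMap_arr_tuple b by blast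
  have hm: "m = h" using x unfolding xd bd by (auto simp: bullet_simps)
  note pb = arr_parts[OF b[unfolded bd]]
  show "fa (Gmor C (idc C (tens C L (unitC C)))) (fa (phiF C L (unitC C)) (map_prod (fa (phi0F C)) id x)) = snd x"
    unfolding xd bd hm using runit_obj[OF L] pb obj_parts[of f s L] obj_parts[of f' s' L] L by (simp add: idc_def phi0F_def)
qed

end

theorem proposition6p13:
  fixes C :: "('o,'m) cat"
  assumes "category C"
  shows "(\<forall>L. comonad_dom C L \<longrightarrow> over_cat C (Gob C L)) \<and>
         (\<forall>L L' \<alpha>. comonad_dom C L \<longrightarrow> comonad_dom C L' \<longrightarrow> comon_mor C L L' \<alpha> \<longrightarrow>
              over_functor (Gob C L) (Gob C L') (Gmor C \<alpha>)) \<and>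
         (\<exists>\<phi> \<phi>0. lax_monoidal_G C \<phi> \<phi>0)"
proof -
  interpret ctx C using assms by unfold_locales
  have "lax_monoidal_G C (phiF C) (phi0F C)"
    unfolding lax_monoidal_G_def
  proof (intro conjI allI impI)
    show "over_functor (unitI C) (Gob C (unitC C)) (phi0F C)" by (rule phi0_over)
  next
    fix L2 L1 assume "comonad_dom C L2" "comonad_dom C L1"
    then show "over_functor (bullet C (Gob C L2) (Gob C L1)) (Gob C (tens C L2 L1)) (phiF C L2 L1)"
      by (intro phi_over)
  next
    fix L2 L2' L1 L1' \<beta> \<alpha>
    assume "comonad_dom C L2" "comonad_dom C L2'" "comonad_dom C L1" "comonad_dom C L1'"
      "comon_mor C L2 L2' \<beta>" "comon_mor C L1 L1' \<alpha>"
    note N = naturality[OF this(3,1,4,2,5,6)]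
    show "\<forall>x\<in>obj (fst (bullet C (Gob C L2) (Gob C L1))).
           fo (phiF C L2' L1') (map_prod (fo (Gmor C \<alpha>)) (fo (Gmor C \<beta>)) x)
             = fo (Gmor C (tens_mor C L2 L1 L1' \<beta> \<alpha>)) (fo (phiF C L2 L1) x)" using N by (rule conjunct1)
    show "\<forall>x\<in>arr (fst (bullet C (Gob C L2) (Gob C L1))).
           fa (phiF C L2' L1') (map_prod (fa (Gmor C \<alpha>)) (fa (Gmor C \<beta>)) x)
             = fa (Gmor C (tens_mor C L2 L1 L1' \<beta> \<alpha>)) (fa (phiF C L2 L1) x)" using N by (rule conjunct2)
  next
    fix L3 L2 L1 assume "comonad_dom C L3" "comonad_dom C L2" "comonad_dom C L1"
    note H = hexagon[OF this(3,2,1)]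
    show "\<forall>x\<in>obj (fst (bullet C (bullet C (Gob C L3) (Gob C L2)) (Gob C L1))).
           fo (Gmor C (idc C (tens C (tens C L3 L2) L1)))
              (fo (phiF C (tens C L3 L2) L1) (map_prod id (fo (phiF C L3 L2)) x))
           = fo (phiF C L3 (tens C L2 L1)) (map_prod (fo (phiF C L2 L1)) id (reassoc x))" using H by (rule conjunct1)
    show "\<forall>x\<in>arr (fst (bullet C (bullet C (Gob C L3) (Gob C L2)) (Gob C L1))).
           fa (Gmor C (idc C (tens C (tens C L3 L2) L1)))
              (fa (phiF C (tens C L3 L2) L1) (map_prod id (fa (phiF C L3 L2)) x))
           = fa (phiF C L3 (tens C L2 L1)) (map_prod (fa (phiF C L2 L1)) id (reassoc x))" using H by (rule conjunct2)
  next
    fix L assume "comonad_dom C L"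
    note U = units[OF this]
    from U show "\<forall>x\<in>obj (fst (bullet C (unitI C) (Gob C L))).
           fo (Gmor C (idc C (tens C (unitC C) L))) (fo (phiF C (unitC C) L) (map_prod id (fo (phi0F C)) x)) = fst x" by (rule conjunct1)
    from U show "\<forall>x\<in>arr (fst (bullet C (unitI C) (Gob C L))).
           fa (Gmor C (idc C (tens C (unitC C) L))) (fa (phiF C (unitC C) L) (map_prod id (fa (phi0F C)) x)) = fst x" by (elim conjE)
    from U show "\<forall>x\<in>obj (fst (bullet C (Gob C L) (unitI C))).
           fo (Gmor C (idc C (tens C L (unitC C)))) (fo (phiF C L (unitC C)) (map_prod (fo (phi0F C)) id x)) = snd x" by (elim conjE)
    from U show "\<forall>x\<in>arr (fst (bullet C (Gob C L) (unitI C))).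
           fa (Gmor C (idc C (tens C L (unitC C)))) (fa (phiF C L (unitC C)) (map_prod (fa (phi0F C)) id x)) = snd x" by (elim conjE)
  qed
  then show ?thesis using Gob_over Gmor_over by (intro conjI allI impI exI) auto
qed

end
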